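(* Let $z_1,\dots,z_m\in\widehat{\mathbb{C}}=\mathbb{C}\cup\{\infty\}$ and let $f$ be a harmonic mapping on $\widehat{\mathbb{C}}\setminus\{z_1,\dots,z_m\}$ with a pole at each $z_j$, such that at each $z_j$ the principal parts (the terms with negative powers) of both series in the local decomposition of $f$ near $z_j$ have only finitely many nonzero terms. Then $$f(z)=r(z)+\overline{s(z)}+\sum_{j=1}^m 2A_j\log|z-z_j|,$$ where $A_1,\dots,A_m\in\mathbb{C}$ and $r,s$ are rational functions which can have poles only at $z_1,\dots,z_m$; if some $z_j=\infty$, the term $\log|z-z_j|$ is replaced by $\log|z|$. In particular, if $f$ is harmonic on all of $\widehat{\mathbb{C}}$, then $f$ is constant.
   Context: A harmonic mapping on an open set $\Omega\subseteq\widehat{\mathbb{C}}$ is a complex-valued function $f$ with $\Delta f=4\partial_{\bar z}\partial_z f=0$, where $\partial_z=\frac12(\partial_x-i\partial_y)$, $\partial_{\bar z}=\frac12(\partial_x+i\partial_y)$ are the Wirtinger derivatives; harmonicity at $\infty$ means $z\mapsto f(1/z)$ is harmonic near $0$. If $f$ is harmonic in a punctured disk $0<|z-z_0|<r$, it has a local decomposition $f(z)=\sum_{k=-\infty}^{\infty}a_k(z-z_0)^k+\overline{\sum_{k=-\infty}^{\infty}b_k(z-z_0)^k}+2A\log|z-z_0|$ with $A\in\mathbb{C}$ (analogously near $\infty$ in powers of $z$ with $\log|z|$). The point $z_0$ is a pole of $f$ if $\lim_{z\to z_0}f(z)=\infty$. *)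

theory Defs
  imports "HOL-Analysis.Analysis" "HOL-Computational_Algebra.Polynomial"
begin

definition pdx :: "(complex \<Rightarrow> complex) \<Rightarrow> complex \<Rightarrow> complex" where
  "pdx f z = vector_derivative (\<lambda>t::real. f (z + of_real t)) (at 0)"

definition pdy :: "(complex \<Rightarrow> complex) \<Rightarrow> complex \<Rightarrow> complex" where
  "pdy f z = vector_derivative (\<lambda>t::real. f (z + \<i> * of_real t)) (at 0)"

definition harmonic_on :: "(complex \<Rightarrow> complex) \<Rightarrow> complex set \<Rightarrow> bool" where
  "harmonic_on f S \<longleftrightarrow> open S \<and>
     (\<forall>z\<in>S. f differentiable (at z) \<and> pdx f differentiable (at z) \<and> pdy f differentiable (at z)) \<and>
     continuous_on S (pdx (pdx f)) \<and> continuous_on S (pdy (pdy f)) \<and>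
     continuous_on S (pdx (pdy f)) \<and> continuous_on S (pdy (pdx f)) \<and>
     (\<forall>z\<in>S. pdx (pdx f) z + pdy (pdy f) z = 0)"

definition harmonic_at_infinity :: "(complex \<Rightarrow> complex) \<Rightarrow> bool" where
  "harmonic_at_infinity f \<longleftrightarrow>
     (\<exists>e>0. \<exists>g. harmonic_on g (ball 0 e) \<and> (\<forall>w. 0 < norm w \<and> norm w < e \<longrightarrow> g w = f (1 / w)))"

definition finite_principal_parts_at :: "(complex \<Rightarrow> complex) \<Rightarrow> complex \<Rightarrow> bool" where
  "finite_principal_parts_at f z0 \<longleftrightarrow>
     (\<exists>r>0. \<exists>a b :: int \<Rightarrow> complex. \<exists>A :: complex.
        finite {k. k < 0 \<and> a k \<noteq> 0} \<and> finite {k. k < 0 \<and> b k \<noteq> 0} \<and>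
        (\<forall>z. 0 < dist z z0 \<and> dist z z0 < r \<longrightarrow>
            (\<lambda>k. a k * (z - z0) powi k) summable_on UNIV \<and>
            (\<lambda>k. b k * (z - z0) powi k) summable_on UNIV \<and>
            f z = (\<Sum>\<^sub>\<infinity>k. a k * (z - z0) powi k) + cnj (\<Sum>\<^sub>\<infinity>k. b k * (z - z0) powi k)
                  + 2 * A * of_real (ln (cmod (z - z0)))))"

text \<open>Same at infinity, in powers of z with log|z|; the principal part at infinity
  consists of the terms with negative powers of the local coordinate 1/z, i.e.
  positive powers of z.\<close>
definition finite_principal_parts_at_infinity :: "(complex \<Rightarrow> complex) \<Rightarrow> bool" where
  "finite_principal_parts_at_infinity f \<longleftrightarrow>
     (\<exists>R>0. \<exists>a b :: int \<Rightarrow> complex. \<exists>A :: complex.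
        finite {k. k > 0 \<and> a k \<noteq> 0} \<and> finite {k. k > 0 \<and> b k \<noteq> 0} \<and>
        (\<forall>z. norm z > R \<longrightarrow>
            (\<lambda>k. a k * z powi k) summable_on UNIV \<and>
            (\<lambda>k. b k * z powi k) summable_on UNIV \<and>
            f z = (\<Sum>\<^sub>\<infinity>k. a k * z powi k) + cnj (\<Sum>\<^sub>\<infinity>k. b k * z powi k)
                  + 2 * A * of_real (ln (cmod z))))"

text \<open>r is a rational function p/q whose poles (in the Riemann sphere) lie among the
  finite points Z and, if inf_pole holds, the point infinity.\<close>
definition rational_with_poles_in :: "(complex \<Rightarrow> complex) \<Rightarrow> complex set \<Rightarrow> bool \<Rightarrow> bool" where
  "rational_with_poles_in r Z inf_pole \<longleftrightarrow>
     (\<exists>p q :: complex poly. q \<noteq> 0 \<and> (\<forall>z. poly q z = 0 \<longrightarrow> z \<in> Z) \<and>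
        (\<not> inf_pole \<longrightarrow> degree p \<le> degree q) \<and>
        (\<forall>z. z \<notin> Z \<longrightarrow> r z = poly p z / poly q z))"

end

theory Submission
  imports Defs "HOL-Complex_Analysis.Complex_Analysis" "HOL-Computational_Algebra.Fundamental_Theorem_Algebra"
begin

lemma pd_from_deriv:
  assumes "(f has_derivative D) (at z)"
  shows "pdx f z = D 1" "pdy f z = D \<i>"
proof -
  have lin: "linear D" using assms has_derivative_linear by blast
  have d1: "((\<lambda>t::real. z + of_real t) has_derivative (\<lambda>t. of_real t)) (at 0)"
    by (auto intro!: derivative_eq_intros)
  have d2: "((\<lambda>t::real. z + \<i> * of_real t) has_derivative (\<lambda>t. \<i> * of_real t)) (at 0)"
    by (auto intro!: derivative_eq_intros)
  have a: "(f has_derivative D) (at (z + of_real 0))" using assms by simp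
  have b: "(f has_derivative D) (at (z + \<i> * of_real 0))" using assms by simp
  have "((\<lambda>t::real. f (z + of_real t)) has_derivative (\<lambda>t. D (of_real t))) (at 0)"
    using has_derivative_compose[OF d1 a] by (simp add: o_def)
  moreover have "(\<lambda>t. D (of_real t)) = (\<lambda>t. t *\<^sub>R D 1)"
  proof
    fix t :: real
    have "of_real t = t *\<^sub>R (1::complex)" by (simp add: scaleR_conv_of_real)
    then show "D (of_real t) = t *\<^sub>R D 1" using lin by (simp add: linear_scale)
  qed
  ultimately have "((\<lambda>t::real. f (z + of_real t)) has_vector_derivative D 1) (at 0)"
    by (simp add: has_vector_derivative_def)
  then show "pdx f z = D 1" unfolding pdx_def by (rule vector_derivative_at)
  have "((\<lambda>t::real. f (z + \<i> * of_real t)) has_derivative (\<lambda>t. D (\<i> * of_real t))) (at 0)"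
    using has_derivative_compose[OF d2 b] by (simp add: o_def)
  moreover have "(\<lambda>t. D (\<i> * of_real t)) = (\<lambda>t. t *\<^sub>R D \<i>)"
  proof
    fix t :: real
    have "\<i> * of_real t = t *\<^sub>R \<i>" by (simp add: scaleR_conv_of_real)
    then show "D (\<i> * of_real t) = t *\<^sub>R D \<i>" using lin by (simp add: linear_scale)
  qed
  ultimately have "((\<lambda>t::real. f (z + \<i> * of_real t)) has_vector_derivative D \<i>) (at 0)"
    by (simp add: has_vector_derivative_def)
  then show "pdy f z = D \<i>" unfolding pdy_def by (rule vector_derivative_at)
qed

lemma lin_decomp:
  assumes "linear (D :: complex \<Rightarrow> complex)"
  shows "D v = of_real (Re v) * D 1 + of_real (Im v) * D \<i>"
proof -
  have "v = Re v *\<^sub>R 1 + Im v *\<^sub>R \<i>" by (simp add: complex_eq_iff)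
  then have "D v = D (Re v *\<^sub>R 1 + Im v *\<^sub>R \<i>)" by simp
  also have "\<dots> = Re v *\<^sub>R D 1 + Im v *\<^sub>R D \<i>"
    using assms by (simp add: linear_add linear_scale)
  finally show ?thesis by (simp add: scaleR_conv_of_real)
qed

lemma deriv_pd:
  assumes "f differentiable (at z)"
  shows "(f has_derivative (\<lambda>v. of_real (Re v) * pdx f z + of_real (Im v) * pdy f z)) (at z)"
proof -
  obtain D where D: "(f has_derivative D) (at z)" using assms differentiable_def by blast
  have lin: "linear D" using D has_derivative_linear by blast
  have "D = (\<lambda>v. of_real (Re v) * pdx f z + of_real (Im v) * pdy f z)"
  proof (rule ext)
    fix v show "D v = of_real (Re v) * pdx f z + of_real (Im v) * pdy f z"
      using lin_decomp[OF lin, of v] pd_from_deriv[OF D] by simp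
  qed
  then show ?thesis using D by simp
qed

lemma dir_vderiv:
  assumes "(f has_derivative D) (at (w0 + of_real s * h))"
  shows "((\<lambda>s::real. f (w0 + of_real s * h)) has_vector_derivative D h) (at s within T)"
proof -
  have lin: "linear D" using assms has_derivative_linear by blast
  have eq: "\<And>s. w0 + of_real s * h = w0 + s *\<^sub>R h" by (simp add: scaleR_conv_of_real)
  have d1: "((\<lambda>s::real. w0 + s *\<^sub>R h) has_derivative (\<lambda>t. t *\<^sub>R h)) (at s within T)"
    by (auto intro!: derivative_eq_intros)
  have a: "(f has_derivative D) (at (w0 + s *\<^sub>R h))" using assms eq by simp
  have "((\<lambda>s::real. f (w0 + s *\<^sub>R h)) has_derivative (\<lambda>t. D (t *\<^sub>R h))) (at s within T)"
    using has_derivative_compose[OF d1 a] by (simp add: o_def)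
  then have "((\<lambda>s::real. f (w0 + s *\<^sub>R h)) has_derivative (\<lambda>t. t *\<^sub>R D h)) (at s within T)"
    using lin by (simp add: linear_scale)
  then show ?thesis by (simp add: has_vector_derivative_def eq)
qed

lemma mixed_limit:
  fixes f G L :: "complex \<Rightarrow> complex" and h k :: complex
  assumes S: "open S" "z \<in> S"
  and Df: "\<And>w. w \<in> S \<Longrightarrow> (f has_derivative Df w) (at w)"
  and G: "\<And>w. w \<in> S \<Longrightarrow> Df w h = G w"
  and L: "(G has_derivative L) (at z)"
  and h: "norm h = 1" and k: "norm k = 1"
  shows "((\<lambda>t::real. (f (z + of_real t * k + of_real t * h) - f (z + of_real t * h) - f (z + of_real t * k) + f z) / of_real (t^2)) \<longlongrightarrow> L k) (at 0)"
proof -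
  have linL: "linear L" using L has_derivative_linear by blast
  have Lalt: "\<forall>e>0. \<exists>d>0. \<forall>y. norm(y - z) < d \<longrightarrow> norm (G y - G z - L(y - z)) \<le> e * norm (y - z)"
    using L has_derivative_at_alt by blast
  show ?thesis
    unfolding tendsto_iff eventually_at
  proof (intro allI impI)
    fix \<epsilon> :: real assume "\<epsilon> > 0"
    define e where "e = \<epsilon> / 10"
    have "e > 0" using \<open>\<epsilon> > 0\<close> by (simp add: e_def)
    obtain d1 where "d1 > 0" and d1: "\<And>y. norm(y - z) < d1 \<Longrightarrow> norm (G y - G z - L(y - z)) \<le> e * norm (y - z)"
      using Lalt \<open>e > 0\<close> by blast
    obtain d2 where "d2 > 0" and d2: "ball z d2 \<subseteq> S" using S open_contains_ball by blast
    define d where "d = min d1 d2 / 2"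
    have "d > 0" using \<open>d1 > 0\<close> \<open>d2 > 0\<close> by (simp add: d_def)
    show "\<exists>d>0. \<forall>t\<in>UNIV. t \<noteq> 0 \<and> dist t 0 < d \<longrightarrow>
        dist ((f (z + of_real t * k + of_real t * h) - f (z + of_real t * h) - f (z + of_real t * k) + f z) / of_real (t^2)) (L k) < \<epsilon>"
    proof (intro exI[of _ d] conjI ballI impI)
      show "d > 0" by fact
      fix t :: real assume t: "t \<noteq> 0 \<and> dist t 0 < d"
      have t0: "t \<noteq> 0" and td: "\<bar>t\<bar> < d" using t by auto
      define E where "E y = G y - G z - L(y - z)" for y
      have Eb: "norm (E y) \<le> e * norm (y - z)" if "norm (y - z) \<le> 2 * \<bar>t\<bar>" for y
        unfolding E_def using that td d1[of y] by (simp add: d_def)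
      have inS: "y \<in> S" if "norm (y - z) \<le> 2 * \<bar>t\<bar>" for y
        using that td d2 by (auto simp: d_def dist_norm norm_minus_commute)
      have Gd: "G y = E y + G z + L (y - z)" for y by (simp add: E_def)
      have Ez: "E z = 0" using linL by (simp add: E_def linear_0)
      define w0 where "w0 = z + of_real t * k"
      define \<phi> where "\<phi> s = f (w0 + of_real s * h) - f (z + of_real s * h)" for s :: real
      define \<phi>' where "\<phi>' s = G (w0 + of_real s * h) - G (z + of_real s * h)" for s :: real
      have seg: "\<bar>s\<bar> \<le> \<bar>t\<bar>" if "s \<in> closed_segment 0 t" for s
        using that by (auto simp: closed_segment_eq_real_ivl split: if_splits)
      have n1: "norm (w0 + of_real s * h - z) \<le> 2 * \<bar>t\<bar>" if "\<bar>s\<bar> \<le> \<bar>t\<bar>" for s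
      proof -
        have "norm (w0 + of_real s * h - z) = norm (of_real t * k + of_real s * h)" by (simp add: w0_def)
        also have "\<dots> \<le> norm (of_real t * k) + norm (of_real s * h)" by (rule norm_triangle_ineq)
        also have "\<dots> = \<bar>t\<bar> + \<bar>s\<bar>" using h k by (simp add: norm_mult)
        finally show ?thesis using that by simp
      qed
      have n2: "norm (z + of_real s * h - z) \<le> \<bar>t\<bar>" if "\<bar>s\<bar> \<le> \<bar>t\<bar>" for s
        using that h by (simp add: norm_mult)
      have der: "(\<phi> has_vector_derivative \<phi>' s) (at s within closed_segment 0 t)"
        if "s \<in> closed_segment 0 t" for s
      proof -
        have s: "\<bar>s\<bar> \<le> \<bar>t\<bar>" using seg that by blast
        have S1: "w0 + of_real s * h \<in> S" using inS n1[OF s] by blast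
        have S2: "z + of_real s * h \<in> S" using inS n2[OF s] by simp
        have a: "((\<lambda>s::real. f (w0 + of_real s * h)) has_vector_derivative G (w0 + of_real s * h)) (at s within closed_segment 0 t)"
          using dir_vderiv[OF Df[OF S1]] G[OF S1] by simp
        have b: "((\<lambda>s::real. f (z + of_real s * h)) has_vector_derivative G (z + of_real s * h)) (at s within closed_segment 0 t)"
          using dir_vderiv[OF Df[OF S2]] G[OF S2] by simp
        show ?thesis unfolding \<phi>_def \<phi>'_def by (rule has_vector_derivative_diff[OF a b])
      qed
      have bnd: "norm (\<phi>' s - \<phi>' 0) \<le> 4 * e * \<bar>t\<bar>" if "s \<in> closed_segment 0 t" for s
      proof -
        have s: "\<bar>s\<bar> \<le> \<bar>t\<bar>" using seg that by blast
        have Lz: "L (w0 + of_real s * h - z) - L (z + of_real s * h - z) - L (w0 - z) = 0"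
        proof -
          have "L (w0 + of_real s * h - z) - L (z + of_real s * h - z) - L (w0 - z)
                = L ((w0 + of_real s * h - z) - (z + of_real s * h - z) - (w0 - z))"
            by (simp only: linear_diff[OF linL])
          also have "(w0 + of_real s * h - z) - (z + of_real s * h - z) - (w0 - z) = 0" by simp
          also have "L 0 = 0" using linL by (simp add: linear_0)
          finally show ?thesis .
        qed
        have "\<phi>' s - \<phi>' 0 = E (w0 + of_real s * h) - E (z + of_real s * h) - E w0 + E z
               + (L (w0 + of_real s * h - z) - L (z + of_real s * h - z) - L (w0 - z))"
          unfolding \<phi>'_def E_def using linear_0[OF linL] by (simp add: algebra_simps)
        also have "\<dots> = E (w0 + of_real s * h) - E (z + of_real s * h) - E w0" using Lz Ez by simp
        finally have eq: "\<phi>' s - \<phi>' 0 = E (w0 + of_real s * h) - E (z + of_real s * h) - E w0" .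
        have e1: "norm (E (w0 + of_real s * h)) \<le> e * (2 * \<bar>t\<bar>)"
          using Eb[OF n1[OF s]] n1[OF s] \<open>e>0\<close> by (meson mult_left_mono less_imp_le order_trans)
        have e2: "norm (E (z + of_real s * h)) \<le> e * \<bar>t\<bar>"
          using Eb n2[OF s] \<open>e>0\<close> by (smt (verit, best) mult_left_mono)
        have n3: "norm (w0 - z) \<le> \<bar>t\<bar>" using k by (simp add: w0_def norm_mult)
        have e3: "norm (E w0) \<le> e * \<bar>t\<bar>"
          using Eb[of w0] n3 \<open>e>0\<close> by (smt (verit, best) mult_left_mono)
        have "norm (\<phi>' s - \<phi>' 0) \<le> norm (E (w0 + of_real s * h)) + norm (E (z + of_real s * h)) + norm (E w0)"
          unfolding eq by (smt (verit) norm_triangle_ineq4)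
        also have "\<dots> \<le> 4 * e * \<bar>t\<bar>" using e1 e2 e3 \<open>e>0\<close> by simp
        finally show ?thesis .
      qed
      have main: "norm (\<phi> t - \<phi> 0 - (t - 0) *\<^sub>R \<phi>' 0) \<le> norm (t - 0) * (4 * e * \<bar>t\<bar>)"
        by (rule vector_differentiable_bound_linearization[where S="closed_segment 0 t" and f=\<phi> and f'=\<phi>' and a=0 and b=t and B="4 * e * \<bar>t\<bar>"])
           (use der bnd in auto)
      have phi0: "\<phi>' 0 = of_real t * L k + E w0"
      proof -
        have "L (of_real t * k) = of_real t * L k"
          using linear_scale[OF linL, of t k] by (simp add: scaleR_conv_of_real)
        then show ?thesis unfolding \<phi>'_def E_def w0_def by simp
      qed
      define \<Delta> where "\<Delta> = f (z + of_real t * k + of_real t * h) - f (z + of_real t * h) - f (z + of_real t * k) + f z"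
      have phiD: "\<phi> t - \<phi> 0 = \<Delta>" unfolding \<phi>_def \<Delta>_def w0_def by simp
      have "\<Delta> - of_real (t^2) * L k = (\<phi> t - \<phi> 0 - (t - 0) *\<^sub>R \<phi>' 0) + of_real t * E w0"
        unfolding phiD[symmetric] phi0 by (simp add: scaleR_conv_of_real algebra_simps power2_eq_square)
      then have "norm (\<Delta> - of_real (t^2) * L k) \<le> norm (\<phi> t - \<phi> 0 - (t - 0) *\<^sub>R \<phi>' 0) + norm (of_real t * E w0)"
        by (simp add: norm_triangle_ineq)
      also have "\<dots> \<le> \<bar>t\<bar> * (4 * e * \<bar>t\<bar>) + \<bar>t\<bar> * (e * \<bar>t\<bar>)"
      proof -
        have n3: "norm (w0 - z) \<le> \<bar>t\<bar>" using k by (simp add: w0_def norm_mult)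
        have "norm (E w0) \<le> e * \<bar>t\<bar>"
          using Eb[of w0] n3 \<open>e>0\<close> by (smt (verit, best) mult_left_mono)
        then have tE: "norm (of_real t * E w0) \<le> \<bar>t\<bar> * (e * \<bar>t\<bar>)" by (simp add: norm_mult mult_left_mono)
        show ?thesis using add_mono[OF main tE] by simp
      qed
      also have "\<dots> = 5 * e * t^2" by (simp add: power2_eq_square abs_mult_self algebra_simps)
      finally have nb: "norm (\<Delta> - of_real (t^2) * L k) \<le> 5 * e * t^2" .
      have tt: "t^2 > 0" using t0 by simp
      have "dist (\<Delta> / of_real (t^2)) (L k) = norm (\<Delta> - of_real (t^2) * L k) / t^2"
      proof -
        have "\<Delta> / of_real (t^2) - L k = (\<Delta> - of_real (t^2) * L k) / of_real (t^2)"
          using tt by (simp add: field_simps)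
        moreover have "norm (of_real (t^2) :: complex) = t^2" by (simp add: norm_power)
        ultimately show ?thesis by (simp only: dist_norm norm_divide)
      qed
      also have "\<dots> \<le> 5 * e" using nb tt by (simp add: divide_le_eq)
      also have "\<dots> < \<epsilon>" using \<open>\<epsilon>>0\<close> by (simp add: e_def)
      finally show "dist ((f (z + of_real t * k + of_real t * h) - f (z + of_real t * h) - f (z + of_real t * k) + f z) / of_real (t^2)) (L k) < \<epsilon>"
        by (simp add: \<Delta>_def)
    qed
  qed
qed

lemma schwarz:
  assumes "open S" "z \<in> S" "\<forall>w\<in>S. f differentiable (at w)"
    "pdx f differentiable (at z)" "pdy f differentiable (at z)"
  shows "pdy (pdx f) z = pdx (pdy f) z"
proof -
  define Df where "Df w = (\<lambda>v. of_real (Re v) * pdx f w + of_real (Im v) * pdy f w)" for w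
  have Df: "\<And>w. w\<in>S \<Longrightarrow> (f has_derivative Df w) (at w)"
    using deriv_pd assms(3) unfolding Df_def by blast
  obtain Lx where Lx: "(pdx f has_derivative Lx) (at z)" using assms(4) differentiable_def by blast
  obtain Ly where Ly: "(pdy f has_derivative Ly) (at z)" using assms(5) differentiable_def by blast
  have x: "pdy (pdx f) z = Lx \<i>" using pd_from_deriv(2)[OF Lx] .
  have y: "pdx (pdy f) z = Ly 1" using pd_from_deriv(1)[OF Ly] .
  have l1: "((\<lambda>t::real. (f (z + of_real t * \<i> + of_real t * 1) - f (z + of_real t * 1) - f (z + of_real t * \<i>) + f z) / of_real (t^2)) \<longlongrightarrow> Lx \<i>) (at 0)"
    by (rule mixed_limit[OF assms(1,2) Df, of 1 "pdx f" Lx \<i>]) (auto simp: Df_def Lx)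
  have l2: "((\<lambda>t::real. (f (z + of_real t * 1 + of_real t * \<i>) - f (z + of_real t * \<i>) - f (z + of_real t * 1) + f z) / of_real (t^2)) \<longlongrightarrow> Ly 1) (at 0)"
    by (rule mixed_limit[OF assms(1,2) Df, of \<i> "pdy f" Ly 1]) (auto simp: Df_def Ly)
  have eq: "(\<lambda>t::real. (f (z + of_real t * 1 + of_real t * \<i>) - f (z + of_real t * \<i>) - f (z + of_real t * 1) + f z) / of_real (t^2))
      = (\<lambda>t::real. (f (z + of_real t * \<i> + of_real t * 1) - f (z + of_real t * 1) - f (z + of_real t * \<i>) + f z) / of_real (t^2))"
    by (rule ext) (simp add: ac_simps)
  have "Lx \<i> = Ly 1"
    using tendsto_unique[OF _ l1 l2[unfolded eq]] by simp
  then show ?thesis using x y by simp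
qed

lemma harm_holo:
  assumes "harmonic_on f S"
  shows "(\<lambda>z. pdx f z - \<i> * pdy f z) holomorphic_on S"
        "(\<lambda>z. cnj (pdx f z + \<i> * pdy f z)) holomorphic_on S"
proof -
  have S: "open S" and dif: "\<forall>z\<in>S. f differentiable (at z) \<and> pdx f differentiable (at z) \<and> pdy f differentiable (at z)"
    and lap: "\<forall>z\<in>S. pdx (pdx f) z + pdy (pdy f) z = 0"
    using assms unfolding harmonic_on_def by auto
  have key: "((\<lambda>z. pdx f z - \<i> * pdy f z) has_field_derivative (pdx (pdx f) z - \<i> * pdx (pdy f) z)) (at z) \<and>
     ((\<lambda>z. cnj (pdx f z + \<i> * pdy f z)) has_field_derivative cnj (pdx (pdx f) z + \<i> * pdx (pdy f) z)) (at z)"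
    if z: "z \<in> S" for z
  proof -
    obtain Lx where Lx: "(pdx f has_derivative Lx) (at z)" using dif z differentiable_def by blast
    obtain Ly where Ly: "(pdy f has_derivative Ly) (at z)" using dif z differentiable_def by blast
    define a where "a = pdx (pdx f) z"
    define b where "b = pdx (pdy f) z"
    have sw: "pdy (pdx f) z = b" unfolding b_def
      by (rule schwarz[OF S z]) (use dif z in auto)
    have lp: "pdy (pdy f) z = - a" using lap z unfolding a_def by (simp add: eq_neg_iff_add_eq_0 add.commute)
    have x1: "Lx 1 = a" "Lx \<i> = b" using pd_from_deriv[OF Lx] sw a_def by auto
    have y1: "Ly 1 = b" "Ly \<i> = - a" using pd_from_deriv[OF Ly] lp b_def by auto
    have Lxv: "Lx v = of_real (Re v) * a + of_real (Im v) * b" for v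
      using lin_decomp[OF has_derivative_linear[OF Lx], of v] unfolding x1 .
    have Lyv: "Ly v = of_real (Re v) * b - of_real (Im v) * a" for v
      using lin_decomp[OF has_derivative_linear[OF Ly], of v] unfolding y1 by simp
    have d1: "((\<lambda>z. pdx f z - \<i> * pdy f z) has_derivative (\<lambda>v. Lx v - \<i> * Ly v)) (at z)"
      by (intro derivative_intros Lx Ly)
    have e1: "(\<lambda>v. Lx v - \<i> * Ly v) = (\<lambda>v. (a - \<i> * b) * v)"
      by (rule ext) (simp add: Lxv Lyv complex_eq_iff algebra_simps)
    have d2: "((\<lambda>z. cnj (pdx f z + \<i> * pdy f z)) has_derivative (\<lambda>v. cnj (Lx v + \<i> * Ly v))) (at z)"
      by (intro bounded_linear.has_derivative[OF bounded_linear_cnj] derivative_intros Lx Ly)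
    have e2: "(\<lambda>v. cnj (Lx v + \<i> * Ly v)) = (\<lambda>v. cnj (a + \<i> * b) * v)"
      by (rule ext) (simp add: Lxv Lyv complex_eq_iff algebra_simps)
    show ?thesis using d1 d2 unfolding e1 e2 has_field_derivative_def a_def b_def
      by (simp add: mult.commute)
  qed
  show "(\<lambda>z. pdx f z - \<i> * pdy f z) holomorphic_on S"
    using key S by (auto simp: holomorphic_on_open)
  show "(\<lambda>z. cnj (pdx f z + \<i> * pdy f z)) holomorphic_on S"
    using key S by (auto simp: holomorphic_on_open)
qed

lemma log_alg:
  fixes w v A :: complex
  assumes "w \<noteq> 0"
  shows "2 * A * of_real ((v \<bullet> sgn w) * inverse (norm w)) = A * (v / w + cnj v / cnj w)"
proof -
  have nw: "norm w \<noteq> 0" using assms by simp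
  have "v / w + cnj v / cnj w = (v * cnj w + cnj v * w) / of_real ((norm w)^2)"
    using assms by (simp add: complex_div_cnj[of v w] complex_div_cnj[of "cnj v" "cnj w"] add_divide_distrib)
  also have "v * cnj w + cnj v * w = of_real (2 * (Re v * Re w + Im v * Im w))"
    by (simp add: complex_eq_iff)
  finally have "v / w + cnj v / cnj w = of_real (2 * (Re v * Re w + Im v * Im w) / (norm w)^2)"
    by simp
  moreover have "v \<bullet> sgn w = (Re w * Re v + Im w * Im v) / norm w"
    by (simp add: sgn_div_norm inner_complex_def divide_inverse algebra_simps)
  ultimately have X: "v / w + cnj v / cnj w = of_real (2 * (Re v * Re w + Im v * Im w) / (norm w)^2)"
    and Y: "(v \<bullet> sgn w) * inverse (norm w) = (Re v * Re w + Im v * Im w) / (norm w)^2"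
    using nw by (simp_all add: power2_eq_square field_simps)
  show ?thesis unfolding X Y by simp
qed

lemma log_deriv:
  assumes "z \<noteq> c"
  shows "((\<lambda>w. 2 * A * of_real (ln (cmod (w - c)))) has_derivative (\<lambda>v. A * (v / (z - c) + cnj v / cnj (z - c)))) (at z)"
proof -
  have n0: "z - c \<noteq> 0" using assms by simp
  have d0: "((\<lambda>w. w - c) has_derivative (\<lambda>v. v)) (at z)" by (intro derivative_eq_intros) auto
  have dn: "(norm has_derivative (\<lambda>h. h \<bullet> sgn (z - c))) (at (z - c))"
    using has_derivative_norm[OF n0] .
  have d1: "((\<lambda>w. norm (w - c)) has_derivative (\<lambda>h. h \<bullet> sgn (z - c))) (at z)"
    using has_derivative_compose[OF d0 dn] by simp
  have d2: "((\<lambda>w. ln (norm (w - c))) has_derivative (\<lambda>h. (h \<bullet> sgn (z - c)) * inverse (norm (z - c)))) (at z)"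
    using DERIV_compose_FDERIV[OF DERIV_ln d1] n0 by simp
  have d3: "((\<lambda>w. 2 * A * of_real (ln (cmod (w - c)))) has_derivative (\<lambda>h. 2 * A * of_real ((h \<bullet> sgn (z - c)) * inverse (norm (z - c))))) (at z)"
    by (intro derivative_intros d2)
  have eqn: "(\<lambda>h. 2 * A * of_real ((h \<bullet> sgn (z - c)) * inverse (norm (z - c)))) = (\<lambda>v. A * (v / (z - c) + cnj v / cnj (z - c)))"
    by (rule ext) (rule log_alg[OF n0])
  show ?thesis using d3 unfolding eqn .
qed

lemma local_wz:
  assumes U: "open U" "z \<in> U" "z \<noteq> c"
    and eq: "\<forall>w\<in>U. f w = h1 w + cnj (h2 w) + 2 * A * of_real (ln (cmod (w - c)))"
    and h1: "h1 holomorphic_on U" and h2: "h2 holomorphic_on U"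
  shows "pdx f z - \<i> * pdy f z = 2 * (deriv h1 z + A / (z - c))"
        "cnj (pdx f z + \<i> * pdy f z) = 2 * (deriv h2 z + cnj A / (z - c))"
proof -
  define a where "a = deriv h1 z"
  define b where "b = deriv h2 z"
  have d1: "(h1 has_derivative (\<lambda>v. a * v)) (at z)"
    using holomorphic_derivI[OF h1 U(1,2), of UNIV] unfolding a_def has_field_derivative_def by simp
  have d2: "(h2 has_derivative (\<lambda>v. b * v)) (at z)"
    using holomorphic_derivI[OF h2 U(1,2), of UNIV] unfolding b_def has_field_derivative_def by simp
  have d3: "((\<lambda>w. cnj (h2 w)) has_derivative (\<lambda>v. cnj (b * v))) (at z)"
    by (rule bounded_linear.has_derivative[OF bounded_linear_cnj d2])
  define w where "w = z - c"
  have n0: "w \<noteq> 0" using U by (simp add: w_def)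
  have cn0: "cnj w \<noteq> 0" using n0 by simp
  define D where "D v = a * v + cnj (b * v) + A * (v / w + cnj v / cnj w)" for v
  have dd: "((\<lambda>w. h1 w + cnj (h2 w) + 2 * A * of_real (ln (cmod (w - c)))) has_derivative D) (at z)"
    unfolding D_def w_def by (intro has_derivative_add d1 d3 log_deriv U(3))
  have df: "(f has_derivative D) (at z)"
    by (rule has_derivative_transform_within_open[OF dd U(1,2)]) (use eq in auto)
  have p1: "pdx f z = D 1" "pdy f z = D \<i>" using pd_from_deriv[OF df] by auto
  have q1: "D 1 - \<i> * D \<i> = 2 * (a + A / w)"
    unfolding D_def using n0 cn0 by (simp add: field_simps)
  have q2: "D 1 + \<i> * D \<i> = 2 * (cnj b + A / cnj w)"
    unfolding D_def using n0 cn0 by (simp add: field_simps)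
  show "pdx f z - \<i> * pdy f z = 2 * (deriv h1 z + A / (z - c))"
    unfolding p1 q1 a_def w_def ..
  show "cnj (pdx f z + \<i> * pdy f z) = 2 * (deriv h2 z + cnj A / (z - c))"
    unfolding p1 q2 b_def w_def by simp
qed

lemma laurent_split:
  fixes a :: "int \<Rightarrow> complex"
  assumes fin: "finite {k. k < 0 \<and> a k \<noteq> 0}" and r: "r > 0"
    and sm: "\<And>w. 0 < norm w \<Longrightarrow> norm w < r \<Longrightarrow> (\<lambda>k. a k * w powi k) summable_on UNIV"
  shows "\<exists>P. P holomorphic_on ball 0 r \<and>
    (\<forall>w. 0 < norm w \<and> norm w < r \<longrightarrow>
      (\<Sum>\<^sub>\<infinity>k. a k * w powi k) = (\<Sum>n\<in>{n. 0 < n \<and> a (- int n) \<noteq> 0}. a (- int n) * (1 / w) ^ n) + P w)"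
proof -
  define P where "P w = (\<Sum>n. a (int n) * w ^ n)" for w
  define F where "F = {n::nat. 0 < n \<and> a (- int n) \<noteq> 0}"
  define G where "G = {k. k < 0 \<and> a k \<noteq> 0}"
  have FG: "F = (\<lambda>k. nat (- k)) ` G"
  proof
    show "F \<subseteq> (\<lambda>k. nat (- k)) ` G"
    proof
      fix n assume "n \<in> F"
      then have "- int n \<in> G" "n = nat (- (- int n))" by (auto simp: F_def G_def)
      then show "n \<in> (\<lambda>k. nat (- k)) ` G" by blast
    qed
    show "(\<lambda>k. nat (- k)) ` G \<subseteq> F"
      by (auto simp: F_def G_def)
  qed
  have finF: "finite F" unfolding FG using fin G_def by simp
  have smn: "summable (\<lambda>n. a (int n) * w ^ n)" if "norm w < r" for w
  proof (cases "w = 0")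
    case True
    show ?thesis by (rule summable_finite[of "{0}"]) (auto simp: True)
  next
    case False
    have "(\<lambda>k. a k * w powi k) summable_on UNIV" using sm[of w] that False by simp
    then have "(\<lambda>k. a k * w powi k) summable_on range int"
      by (rule summable_on_subset_banach) simp
    then have "((\<lambda>k. a k * w powi k) \<circ> int) summable_on UNIV"
      by (subst (asm) summable_on_reindex) (auto simp: inj_on_def)
    then have "(\<lambda>n. a (int n) * w ^ n) summable_on UNIV" by (simp add: o_def)
    then show ?thesis by (rule summable_on_imp_summable)
  qed
  have hol: "P holomorphic_on ball 0 r"
  proof -
    have "\<forall>z\<in>ball 0 r. \<exists>f'. DERIV P z :> f'"
    proof
      fix z :: complex assume "z \<in> ball 0 r"
      then have "norm z < r" by simp
      show "\<exists>f'. DERIV P z :> f'"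
        unfolding P_def[abs_def] using termdiffs_strong'[of r "\<lambda>n. a (int n)" z, OF smn \<open>norm z < r\<close>] by blast
    qed
    then show ?thesis by (simp add: holomorphic_on_open)
  qed
  have eq: "(\<Sum>\<^sub>\<infinity>k. a k * w powi k) = (\<Sum>n\<in>F. a (- int n) * (1 / w) ^ n) + P w"
    if w: "0 < norm w" "norm w < r" for w
  proof -
    define g where "g k = a k * w powi k" for k
    have gs: "g summable_on UNIV" using sm[OF w] by (simp add: g_def[abs_def])
    have U: "(UNIV :: int set) = {k. k < 0} \<union> range int"
    proof -
      have "k \<in> range int" if "\<not> k < 0" for k :: int
        using that by (metis nonneg_int_cases rangeI not_less)
      then show ?thesis by auto
    qed
    have "infsum g UNIV = infsum g {k. k < 0} + infsum g (range int)"
      unfolding U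
      by (rule infsum_Un_disjoint) (auto intro: summable_on_subset_banach[OF gs])
    moreover have "infsum g {k. k < 0} = (\<Sum>n\<in>F. a (- int n) * (1 / w) ^ n)"
    proof -
      have "infsum g {k. k < 0} = infsum g G"
        by (rule infsum_cong_neutral) (auto simp: G_def g_def)
      also have "\<dots> = sum g G" using fin by (simp add: G_def)
      also have "\<dots> = (\<Sum>n\<in>F. a (- int n) * (1 / w) ^ n)"
      proof (rule sum.reindex_bij_witness[of _ "\<lambda>n. - int n" "\<lambda>k. nat (- k)"])
        fix k assume "k \<in> G" then show "- int (nat (- k)) = k" by (auto simp: G_def)
      next
        fix k assume "k \<in> G" then show "nat (- k) \<in> F" by (auto simp: F_def G_def)
      next
        fix n assume "n \<in> F" then show "nat (- (- int n)) = n" by simp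
      next
        fix n assume "n \<in> F" then show "- int n \<in> G" by (auto simp: F_def G_def)
      next
        fix k assume "k \<in> G"
        then have kk: "k = - int (nat (- k))" by (auto simp: G_def)
        have gm: "g (- int m) = a (- int m) * (1 / w) ^ m" for m
          by (simp add: g_def power_int_minus power_one_over divide_inverse power_inverse)
        show "a (- int (nat (- k))) * (1 / w) ^ nat (- k) = g k" using gm[of "nat (- k)"] kk by metis
      qed
      finally show ?thesis .
    qed
    moreover have "infsum g (range int) = P w"
    proof -
      have "infsum g (range int) = infsum (g \<circ> int) UNIV"
        by (rule infsum_reindex) (auto simp: inj_on_def)
      also have "g \<circ> int = (\<lambda>n. a (int n) * w ^ n)" by (auto simp: g_def o_def)
      finally have e: "infsum g (range int) = infsum (\<lambda>n. a (int n) * w ^ n) UNIV" .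
      have "(\<lambda>n. a (int n) * w ^ n) summable_on UNIV"
      proof -
        have "g summable_on range int" by (rule summable_on_subset_banach[OF gs]) simp
        then have "(g \<circ> int) summable_on UNIV"
          by (subst (asm) summable_on_reindex) (auto simp: inj_on_def)
        then show ?thesis by (simp add: g_def o_def)
      qed
      then have "((\<lambda>n. a (int n) * w ^ n) has_sum infsum (\<lambda>n. a (int n) * w ^ n) UNIV) UNIV"
        by (rule has_sum_infsum)
      then have "(\<lambda>n. a (int n) * w ^ n) sums infsum (\<lambda>n. a (int n) * w ^ n) UNIV"
        by (rule has_sum_imp_sums)
      then show ?thesis unfolding e P_def by (simp add: sums_iff)
    qed
    ultimately show ?thesis by (simp add: g_def[abs_def])
  qed
  show ?thesis using hol eq unfolding F_def by blast
qed

lemma rat_mono: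
  assumes "rational_with_poles_in r Z1 ip1" "Z1 \<subseteq> Z2" "ip1 \<longrightarrow> ip2"
  shows "rational_with_poles_in r Z2 ip2"
  using assms unfolding rational_with_poles_in_def by blast

lemma rat_const: "rational_with_poles_in (\<lambda>_. c) Z ip"
  unfolding rational_with_poles_in_def
  by (rule exI[of _ "[:c:]"], rule exI[of _ 1]) auto

lemma rat_add:
  assumes "rational_with_poles_in r Z ip" "rational_with_poles_in s Z ip"
  shows "rational_with_poles_in (\<lambda>z. r z + s z) Z ip"
proof -
  obtain p1 q1 where 1: "q1 \<noteq> 0" "\<forall>z. poly q1 z = 0 \<longrightarrow> z \<in> Z" "\<not> ip \<longrightarrow> degree p1 \<le> degree q1"
      "\<forall>z. z \<notin> Z \<longrightarrow> r z = poly p1 z / poly q1 z"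
    using assms(1) unfolding rational_with_poles_in_def by blast
  obtain p2 q2 where 2: "q2 \<noteq> 0" "\<forall>z. poly q2 z = 0 \<longrightarrow> z \<in> Z" "\<not> ip \<longrightarrow> degree p2 \<le> degree q2"
      "\<forall>z. z \<notin> Z \<longrightarrow> s z = poly p2 z / poly q2 z"
    using assms(2) unfolding rational_with_poles_in_def by blast
  have A: "q1 * q2 \<noteq> 0" using 1 2 by simp
  have B: "\<forall>z. poly (q1 * q2) z = 0 \<longrightarrow> z \<in> Z" using 1 2 by auto
  have C: "\<not> ip \<longrightarrow> degree (p1 * q2 + p2 * q1) \<le> degree (q1 * q2)"
  proof
    assume "\<not> ip"
    then have d: "degree p1 \<le> degree q1" "degree p2 \<le> degree q2" using 1 2 by auto
    have "degree (p1 * q2) \<le> degree q1 + degree q2"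
      using degree_mult_le[of p1 q2] d by linarith
    moreover have "degree (p2 * q1) \<le> degree q1 + degree q2"
      using degree_mult_le[of p2 q1] d by linarith
    ultimately have "degree (p1 * q2 + p2 * q1) \<le> degree q1 + degree q2"
      by (rule degree_add_le)
    then show "degree (p1 * q2 + p2 * q1) \<le> degree (q1 * q2)"
      using 1 2 by (simp add: degree_mult_eq)
  qed
  have D: "\<forall>z. z \<notin> Z \<longrightarrow> r z + s z = poly (p1 * q2 + p2 * q1) z / poly (q1 * q2) z"
  proof (intro allI impI)
    fix z assume z: "z \<notin> Z"
    then have "poly q1 z \<noteq> 0" "poly q2 z \<noteq> 0" using 1 2 by auto
    then show "r z + s z = poly (p1 * q2 + p2 * q1) z / poly (q1 * q2) z"
      using 1 2 z by (simp add: field_simps)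
  qed
  show ?thesis unfolding rational_with_poles_in_def using A B C D by blast
qed

lemma rat_sum:
  assumes "finite I" "\<And>i. i \<in> I \<Longrightarrow> rational_with_poles_in (r i) Z ip"
  shows "rational_with_poles_in (\<lambda>z. \<Sum>i\<in>I. r i z) Z ip"
  using assms
proof (induction I rule: finite_induct)
  case empty
  then show ?case using rat_const[of 0] by simp
next
  case (insert x F)
  then show ?case by (simp add: rat_add)
qed

lemma rat_polyfun:
  assumes "finite F"
  shows "rational_with_poles_in (\<lambda>z. \<Sum>n\<in>F. c n * z ^ n) Z True"
proof (rule rat_sum[OF assms])
  fix n
  show "rational_with_poles_in (\<lambda>z. c n * z ^ n) Z True"
    unfolding rational_with_poles_in_def
    by (rule exI[of _ "monom (c n) n"], rule exI[of _ 1]) (auto simp: poly_monom)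
qed

lemma rat_pole:
  assumes "finite F" "j \<in> Z"
  shows "rational_with_poles_in (\<lambda>z. \<Sum>n\<in>F. c n * (1 / (z - j)) ^ n) Z ip"
proof (rule rat_sum[OF assms(1)])
  fix n
  show "rational_with_poles_in (\<lambda>z. c n * (1 / (z - j)) ^ n) Z ip"
  proof -
    have A: "[:- j, 1:] ^ n \<noteq> 0" by simp
    have B: "\<forall>z. poly ([:- j, 1:] ^ n) z = 0 \<longrightarrow> z \<in> Z" using assms by (auto simp: poly_power)
    have C: "degree [:c n:] \<le> degree ([:- j, 1:] ^ n)" by simp
    have D: "\<forall>z. z \<notin> Z \<longrightarrow> c n * (1 / (z - j)) ^ n = poly [:c n:] z / poly ([:- j, 1:] ^ n) z"
    proof (intro allI impI)
      fix z assume "z \<notin> Z"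
      then have "z \<noteq> j" using assms by auto
      then show "c n * (1 / (z - j)) ^ n = poly [:c n:] z / poly ([:- j, 1:] ^ n) z"
        by (simp add: poly_power power_one_over divide_inverse power_inverse)
    qed
    show ?thesis unfolding rational_with_poles_in_def using A B C D by blast
  qed
qed

lemma inf_deriv_lim:
  assumes H: "H holomorphic_on ball 0 \<rho>" "\<rho> > 0"
  shows "((\<lambda>z. deriv (\<lambda>w. H (1 / (w - c))) z) \<longlongrightarrow> 0) at_infinity"
proof -
  have ev: "eventually (\<lambda>z. deriv (\<lambda>w. H (1 / (w - c))) z = deriv H (1 / (z - c)) * (- 1 / (z - c)^2)) at_infinity"
    unfolding eventually_at_infinity
  proof (intro exI[of _ "norm c + 2 / \<rho>"] allI impI)
    fix z :: complex assume z: "norm c + 2 / \<rho> \<le> norm z"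
    have "norm z - norm c \<le> norm (z - c)" by (rule norm_triangle_ineq2)
    then have zc: "2 / \<rho> \<le> norm (z - c)" using z by linarith
    have pos: "0 < 2 / \<rho>" using H by simp
    then have "0 < norm (z - c)" using zc by linarith
    then have nz: "z - c \<noteq> 0" by auto
    have "norm (1 / (z - c)) = 1 / norm (z - c)" by (simp add: norm_divide)
    also have "\<dots> \<le> 1 / (2 / \<rho>)" using zc pos \<open>0 < norm (z - c)\<close> by (intro divide_left_mono) (auto intro: mult_pos_pos)
    also have "\<dots> < \<rho>" using H by simp
    finally have inb: "1 / (z - c) \<in> ball 0 \<rho>" by simp
    have d1: "((\<lambda>w. 1 / (w - c)) has_field_derivative (- 1 / (z - c)^2)) (at z)"
      using nz by (auto intro!: derivative_eq_intros simp: power2_eq_square divide_simps)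
    have d2: "DERIV H (1 / (z - c)) :> deriv H (1 / (z - c))"
      using holomorphic_derivI[OF H(1) open_ball inb] .
    show "deriv (\<lambda>w. H (1 / (w - c))) z = deriv H (1 / (z - c)) * (- 1 / (z - c)^2)"
      by (rule DERIV_imp_deriv) (rule DERIV_chain'[OF d1 d2])
  qed
  have l1: "((\<lambda>z. 1 / (z - c)) \<longlongrightarrow> 0) at_infinity"
  proof (rule tendsto_divide_0[OF tendsto_const])
    have "filterlim (\<lambda>z. - c + z) at_infinity at_infinity"
      by (rule tendsto_add_filterlim_at_infinity[OF tendsto_const filterlim_ident])
    then show "filterlim (\<lambda>z. z - c) at_infinity at_infinity" by simp
  qed
  have cont: "isCont (deriv H) 0"
  proof -
    have "continuous_on (ball 0 \<rho>) (deriv H)"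
      by (rule holomorphic_on_imp_continuous_on[OF holomorphic_deriv[OF H(1) open_ball]])
    then show ?thesis using H(2) by (simp add: continuous_on_eq_continuous_at)
  qed
  have l2: "((\<lambda>z. deriv H (1 / (z - c))) \<longlongrightarrow> deriv H 0) at_infinity"
    by (rule isCont_tendsto_compose[OF cont l1])
  have l3: "((\<lambda>z. - ((1 / (z - c))^2)) \<longlongrightarrow> - (0^2)) at_infinity"
    by (intro tendsto_intros l1)
  have l4: "((\<lambda>z. deriv H (1 / (z - c)) * (- ((1 / (z - c))^2))) \<longlongrightarrow> deriv H 0 * (- (0^2))) at_infinity"
    by (rule tendsto_mult[OF l2 l3])
  have "((\<lambda>z. deriv H (1 / (z - c)) * (- 1 / (z - c)^2)) \<longlongrightarrow> 0) at_infinity"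
    using l4 by (simp add: power_one_over)
  then show ?thesis using tendsto_cong[OF ev] by simp
qed

lemma inv_lim: "((\<lambda>z. \<alpha> / (z - c)) \<longlongrightarrow> 0) at_infinity" for c :: complex
proof -
  have "filterlim (\<lambda>z. - c + z) at_infinity at_infinity"
    by (rule tendsto_add_filterlim_at_infinity[OF tendsto_const filterlim_ident])
  then have "filterlim (\<lambda>z. z - c) at_infinity at_infinity" by simp
  then show ?thesis by (rule tendsto_divide_0[OF tendsto_const])
qed

lemma global_zero:
  assumes Z: "finite Z" and hol: "G holomorphic_on (- Z)"
    and loc: "\<And>j. j \<in> Z \<Longrightarrow> \<exists>\<rho>>0. \<exists>H. H holomorphic_on ball j \<rho> \<and> (\<forall>z. 0 < dist z j \<and> dist z j < \<rho> \<longrightarrow> G z = H z)"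
    and lim: "(G \<longlongrightarrow> 0) at_infinity"
  shows "\<forall>z. z \<notin> Z \<longrightarrow> G z = 0"
proof -
  define G' where "G' z = (if z \<in> Z then Lim (at z) G else G z)" for z
  have tj: "(G' \<longlongrightarrow> G' j) (at j)" if j: "j \<in> Z" for j
  proof -
    obtain \<rho> H where \<rho>: "\<rho> > 0" and H: "H holomorphic_on ball j \<rho>"
      and GH: "\<forall>z. 0 < dist z j \<and> dist z j < \<rho> \<longrightarrow> G z = H z"
      using loc[OF j] by blast
    obtain e where e: "e > 0" "\<forall>w\<in>ball j e. w \<in> UNIV \<and> (w \<noteq> j \<longrightarrow> w \<notin> Z)"
      using finite_ball_avoid[OF open_UNIV Z, of j] by blast
    have "continuous_on (ball j \<rho>) H" by (rule holomorphic_on_imp_continuous_on[OF H])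
    then have cH: "isCont H j" using \<rho> by (simp add: continuous_on_eq_continuous_at)
    then have tH: "(H \<longlongrightarrow> H j) (at j)" by (simp add: isCont_def)
    have ev1: "eventually (\<lambda>w. G w = H w) (at j)"
      unfolding eventually_at using \<rho> GH by (intro exI[of _ \<rho>]) (auto simp: dist_commute)
    have ev2: "eventually (\<lambda>w. G' w = H w) (at j)"
      unfolding eventually_at
    proof (intro exI[of _ "min \<rho> e"] conjI ballI impI)
      show "0 < min \<rho> e" using \<rho> e by simp
      fix w assume "w \<in> UNIV" "w \<noteq> j \<and> dist w j < min \<rho> e"
      then have "w \<notin> Z" "0 < dist w j" "dist w j < \<rho>" using e by (auto simp: dist_commute)
      then show "G' w = H w" using GH by (simp add: G'_def)
    qed
    have tG: "(G \<longlongrightarrow> H j) (at j)" using tH tendsto_cong[OF ev1] by simp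
    have "Lim (at j) G = H j" by (rule tendsto_Lim[OF trivial_limit_at tG])
    then have "G' j = H j" using j by (simp add: G'_def)
    moreover have "(G' \<longlongrightarrow> H j) (at j)" using tH tendsto_cong[OF ev2] by simp
    ultimately show ?thesis by simp
  qed
  have hol': "G' holomorphic_on UNIV"
  proof (rule no_isolated_singularity'[OF _ _ open_UNIV Z])
    show "\<And>z. z \<in> Z \<Longrightarrow> (G' \<longlongrightarrow> G' z) (at z within UNIV)" using tj by simp
    have "G holomorphic_on (UNIV - Z)" using hol by (simp add: Compl_eq_Diff_UNIV)
    then show "G' holomorphic_on (UNIV - Z)"
      by (rule holomorphic_cong[THEN iffD1, rotated 2]) (auto simp: G'_def)
  qed
  obtain B where B: "\<forall>z\<in>Z. norm z \<le> B"
    using finite_imp_bounded[OF Z] bounded_iff by blast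
  have ev: "eventually (\<lambda>z. G' z = G z) at_infinity"
    unfolding eventually_at_infinity
    by (intro exI[of _ "B + 1"]) (use B in \<open>force simp: G'_def\<close>)
  have "(G' \<longlongrightarrow> 0) at_infinity" using lim tendsto_cong[OF ev] by simp
  then have G0: "\<And>z. G' z = 0" using Liouville_weak_0[OF hol'] by blast
  show ?thesis
  proof (intro allI impI)
    fix z assume "z \<notin> Z"
    then show "G z = 0" using G0[of z] by (simp add: G'_def)
  qed
qed

lemma fin_neg:
  assumes "finite {k. k < 0 \<and> a k \<noteq> 0}"
  shows "finite {n::nat. 0 < n \<and> a (- int n) \<noteq> 0}"
proof -
  have "{n::nat. 0 < n \<and> a (- int n) \<noteq> 0} \<subseteq> (\<lambda>k. nat (- k)) ` {k. k < 0 \<and> a k \<noteq> 0}"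
  proof
    fix n assume "n \<in> {n::nat. 0 < n \<and> a (- int n) \<noteq> 0}"
    then have "- int n \<in> {k. k < 0 \<and> a k \<noteq> 0}" "n = nat (- (- int n))" by auto
    then show "n \<in> (\<lambda>k. nat (- k)) ` {k. k < 0 \<and> a k \<noteq> 0}" by blast
  qed
  then show ?thesis using assms finite_subset by blast
qed

lemma hol_inv_comp:
  assumes H: "H holomorphic_on T" and U: "\<And>w. w \<in> U \<Longrightarrow> w \<noteq> c \<and> 1 / (w - c) \<in> T"
  shows "(\<lambda>w. H (1 / (w - c))) holomorphic_on U"
proof -
  have "(\<lambda>w. 1 / (w - c)) holomorphic_on U"
    using U by (intro holomorphic_intros) auto
  then have "(H \<circ> (\<lambda>w. 1 / (w - c))) holomorphic_on U"
    by (rule holomorphic_on_compose_gen[OF _ H]) (use U in auto)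
  then show ?thesis by (simp add: o_def)
qed

lemma local_at:
  assumes "finite_principal_parts_at f c"
  shows "\<exists>\<rho>>0. \<exists>Fa ca Pa Fb cb Pb A. finite Fa \<and> finite Fb \<and> Pa holomorphic_on ball c \<rho> \<and> Pb holomorphic_on ball c \<rho> \<and>
     (\<forall>z. 0 < dist z c \<and> dist z c < \<rho> \<longrightarrow> f z = ((\<Sum>n\<in>Fa. ca n * (1 / (z - c)) ^ n) + Pa z)
        + cnj ((\<Sum>n\<in>Fb. cb n * (1 / (z - c)) ^ n) + Pb z) + 2 * A * of_real (ln (cmod (z - c))))"
proof -
  obtain r a b A where r: "r > 0" and fa: "finite {k. k < 0 \<and> a k \<noteq> 0}" and fb: "finite {k. k < 0 \<and> b k \<noteq> 0}"
    and H: "\<forall>z. 0 < dist z c \<and> dist z c < r \<longrightarrow>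
            (\<lambda>k. a k * (z - c) powi k) summable_on UNIV \<and>
            (\<lambda>k. b k * (z - c) powi k) summable_on UNIV \<and>
            f z = (\<Sum>\<^sub>\<infinity>k. a k * (z - c) powi k) + cnj (\<Sum>\<^sub>\<infinity>k. b k * (z - c) powi k)
                  + 2 * A * of_real (ln (cmod (z - c)))"
    using assms unfolding finite_principal_parts_at_def by blast
  have sab: "(\<lambda>k. a k * w powi k) summable_on UNIV \<and> (\<lambda>k. b k * w powi k) summable_on UNIV"
    if "0 < norm w" "norm w < r" for w
  proof -
    have "0 < dist (c + w) c \<and> dist (c + w) c < r" using that by (simp add: dist_norm)
    then show ?thesis using H[rule_format, of "c + w"] by simp
  qed
  obtain Pa0 where Pa0: "Pa0 holomorphic_on ball 0 r" and ea: "\<forall>w. 0 < norm w \<and> norm w < r \<longrightarrow>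
      (\<Sum>\<^sub>\<infinity>k. a k * w powi k) = (\<Sum>n\<in>{n. 0 < n \<and> a (- int n) \<noteq> 0}. a (- int n) * (1 / w) ^ n) + Pa0 w"
    using laurent_split[OF fa r] sab by blast
  obtain Pb0 where Pb0: "Pb0 holomorphic_on ball 0 r" and eb: "\<forall>w. 0 < norm w \<and> norm w < r \<longrightarrow>
      (\<Sum>\<^sub>\<infinity>k. b k * w powi k) = (\<Sum>n\<in>{n. 0 < n \<and> b (- int n) \<noteq> 0}. b (- int n) * (1 / w) ^ n) + Pb0 w"
    using laurent_split[OF fb r] sab by blast
  have shift: "(\<lambda>z. P (z - c)) holomorphic_on ball c r" if "P holomorphic_on ball 0 r" for P
  proof -
    have "(P \<circ> (\<lambda>z. z - c)) holomorphic_on ball c r"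
      by (rule holomorphic_on_compose_gen[OF _ that]) (auto intro!: holomorphic_intros simp: dist_norm norm_minus_commute)
    then show ?thesis by (simp add: o_def)
  qed
  have eqs: "\<forall>z. 0 < dist z c \<and> dist z c < r \<longrightarrow> f z = ((\<Sum>n\<in>{n. 0 < n \<and> a (- int n) \<noteq> 0}. a (- int n) * (1 / (z - c)) ^ n) + Pa0 (z - c))
        + cnj ((\<Sum>n\<in>{n. 0 < n \<and> b (- int n) \<noteq> 0}. b (- int n) * (1 / (z - c)) ^ n) + Pb0 (z - c)) + 2 * A * of_real (ln (cmod (z - c)))"
  proof (intro allI impI)
    fix z assume z: "0 < dist z c \<and> dist z c < r"
    then have w: "0 < norm (z - c) \<and> norm (z - c) < r" by (simp add: dist_norm)
    show "f z = ((\<Sum>n\<in>{n. 0 < n \<and> a (- int n) \<noteq> 0}. a (- int n) * (1 / (z - c)) ^ n) + Pa0 (z - c))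
        + cnj ((\<Sum>n\<in>{n. 0 < n \<and> b (- int n) \<noteq> 0}. b (- int n) * (1 / (z - c)) ^ n) + Pb0 (z - c)) + 2 * A * of_real (ln (cmod (z - c)))"
      using H[rule_format, OF z] ea[rule_format, OF w] eb[rule_format, OF w] by simp
  qed
  show ?thesis
    apply (rule exI[of _ r], rule conjI[OF r])
    apply (rule exI[of _ "{n. 0 < n \<and> a (- int n) \<noteq> 0}"], rule exI[of _ "\<lambda>n. a (- int n)"], rule exI[of _ "\<lambda>z. Pa0 (z - c)"])
    apply (rule exI[of _ "{n. 0 < n \<and> b (- int n) \<noteq> 0}"], rule exI[of _ "\<lambda>n. b (- int n)"], rule exI[of _ "\<lambda>z. Pb0 (z - c)"])
    apply (rule exI[of _ A])
    by (intro conjI fin_neg[OF fa] fin_neg[OF fb] shift[OF Pa0] shift[OF Pb0] eqs)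
qed

lemma local_inf:
  assumes "finite_principal_parts_at_infinity f"
  shows "\<exists>R>0. \<exists>Fa ca Wa Fb cb Wb A. finite Fa \<and> finite Fb \<and> Wa holomorphic_on ball 0 (1 / R) \<and> Wb holomorphic_on ball 0 (1 / R) \<and>
     (\<forall>z. R < norm z \<longrightarrow> f z = ((\<Sum>n\<in>Fa. ca n * z ^ n) + Wa (1 / (z - 0)))
        + cnj ((\<Sum>n\<in>Fb. cb n * z ^ n) + Wb (1 / (z - 0))) + 2 * A * of_real (ln (cmod (z - 0))))"
proof -
  obtain R a b A where R: "R > 0" and fa: "finite {k. k > 0 \<and> a k \<noteq> 0}" and fb: "finite {k. k > 0 \<and> b k \<noteq> 0}"
    and H: "\<forall>z. norm z > R \<longrightarrow>
            (\<lambda>k. a k * z powi k) summable_on UNIV \<and>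
            (\<lambda>k. b k * z powi k) summable_on UNIV \<and>
            f z = (\<Sum>\<^sub>\<infinity>k. a k * z powi k) + cnj (\<Sum>\<^sub>\<infinity>k. b k * z powi k)
                  + 2 * A * of_real (ln (cmod z))"
    using assms unfolding finite_principal_parts_at_infinity_def by blast
  have injm: "inj (uminus :: int \<Rightarrow> int)" by (simp add: inj_on_def)
  have surjm: "range (uminus :: int \<Rightarrow> int) = UNIV" by (metis surj_def minus_minus)
  have finm: "finite {k. k < 0 \<and> d (- k) \<noteq> 0}" if "finite {k. k > 0 \<and> d k \<noteq> 0}" for d :: "int \<Rightarrow> complex"
  proof -
    have "{k. k < 0 \<and> d (- k) \<noteq> 0} = uminus -` {k. k > 0 \<and> d k \<noteq> 0}" by auto
    then show ?thesis using finite_vimageI[OF that injm] by simp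
  qed
  have pw: "(1 / z) powi k = z powi (- k)" for z :: complex and k
    by (simp add: power_int_minus divide_inverse power_int_inverse)
  have reidx: "(\<lambda>k. d (- k) * (1 / z) powi k) = (\<lambda>k. d k * z powi k) \<circ> uminus" for d :: "int \<Rightarrow> complex" and z
    by (auto simp: pw o_def)
  have sm: "(\<lambda>k. d (- k) * w powi k) summable_on UNIV"
    if "(\<lambda>k. d k * (1 / w) powi k) summable_on UNIV" for d :: "int \<Rightarrow> complex" and w :: complex
  proof -
    have "(\<lambda>k. d k * (1 / w) powi k) summable_on range uminus" using that surjm by simp
    then have "((\<lambda>k. d k * (1 / w) powi k) \<circ> uminus) summable_on UNIV"
      by (subst (asm) summable_on_reindex) (use injm in auto)
    moreover have "(\<lambda>k. d (- k) * (1 / (1 / w)) powi k) = (\<lambda>k. d k * (1 / w) powi k) \<circ> uminus"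
      by (rule reidx)
    ultimately show ?thesis by simp
  qed
  have isum: "(\<Sum>\<^sub>\<infinity>k. d k * z powi k) = (\<Sum>\<^sub>\<infinity>k. d (- k) * (1 / z) powi k)" for d :: "int \<Rightarrow> complex" and z
  proof -
    have "(\<Sum>\<^sub>\<infinity>k. d k * z powi k) = infsum (\<lambda>k. d k * z powi k) (range uminus)" using surjm by simp
    also have "\<dots> = infsum ((\<lambda>k. d k * z powi k) \<circ> uminus) UNIV"
      by (rule infsum_reindex) (use injm in auto)
    finally show ?thesis by (simp add: reidx)
  qed
  have RR: "1 / R > 0" using R by simp
  have sab: "(\<lambda>k. a (- k) * w powi k) summable_on UNIV \<and> (\<lambda>k. b (- k) * w powi k) summable_on UNIV"
    if "0 < norm w" "norm w < 1 / R" for w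
  proof -
    have "norm (1 / w) > R" using that R by (simp add: norm_divide field_simps)
    note h = H[rule_format, OF this]
    show ?thesis using sm[of a w] sm[of b w] h by simp
  qed
  obtain Wa where Wa: "Wa holomorphic_on ball 0 (1 / R)" and ea: "\<forall>w. 0 < norm w \<and> norm w < 1 / R \<longrightarrow>
      (\<Sum>\<^sub>\<infinity>k. a (- k) * w powi k) = (\<Sum>n\<in>{n. 0 < n \<and> a (- (- int n)) \<noteq> 0}. a (- (- int n)) * (1 / w) ^ n) + Wa w"
    using laurent_split[of "\<lambda>k. a (- k)", OF finm[OF fa] RR] sab by blast
  obtain Wb where Wb: "Wb holomorphic_on ball 0 (1 / R)" and eb: "\<forall>w. 0 < norm w \<and> norm w < 1 / R \<longrightarrow>
      (\<Sum>\<^sub>\<infinity>k. b (- k) * w powi k) = (\<Sum>n\<in>{n. 0 < n \<and> b (- (- int n)) \<noteq> 0}. b (- (- int n)) * (1 / w) ^ n) + Wb w"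
    using laurent_split[of "\<lambda>k. b (- k)", OF finm[OF fb] RR] sab by blast
  have fpos: "finite {n::nat. 0 < n \<and> d (int n) \<noteq> 0}" if "finite {k. k > 0 \<and> d k \<noteq> 0}" for d :: "int \<Rightarrow> complex"
    using fin_neg[OF finm[OF that]] by simp
  have eqs: "\<forall>z. R < norm z \<longrightarrow> f z = ((\<Sum>n\<in>{n. 0 < n \<and> a (int n) \<noteq> 0}. a (int n) * z ^ n) + Wa (1 / (z - 0)))
        + cnj ((\<Sum>n\<in>{n. 0 < n \<and> b (int n) \<noteq> 0}. b (int n) * z ^ n) + Wb (1 / (z - 0))) + 2 * A * of_real (ln (cmod (z - 0)))"
  proof (intro allI impI)
    fix z :: complex assume z: "R < norm z"
    then have z0: "z \<noteq> 0" using R by auto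
    have w: "0 < norm (1 / z) \<and> norm (1 / z) < 1 / R" using z R z0 by (simp add: norm_divide field_simps)
    have "(\<Sum>\<^sub>\<infinity>k. a k * z powi k) = (\<Sum>n\<in>{n. 0 < n \<and> a (int n) \<noteq> 0}. a (int n) * z ^ n) + Wa (1 / z)"
      using isum[of a z] ea[rule_format, OF w] z0 by simp
    moreover have "(\<Sum>\<^sub>\<infinity>k. b k * z powi k) = (\<Sum>n\<in>{n. 0 < n \<and> b (int n) \<noteq> 0}. b (int n) * z ^ n) + Wb (1 / z)"
      using isum[of b z] eb[rule_format, OF w] z0 by simp
    ultimately show "f z = ((\<Sum>n\<in>{n. 0 < n \<and> a (int n) \<noteq> 0}. a (int n) * z ^ n) + Wa (1 / (z - 0)))
        + cnj ((\<Sum>n\<in>{n. 0 < n \<and> b (int n) \<noteq> 0}. b (int n) * z ^ n) + Wb (1 / (z - 0))) + 2 * A * of_real (ln (cmod (z - 0)))"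
      using H[rule_format, OF z] by simp
  qed
  show ?thesis
    apply (rule exI[of _ R], rule conjI[OF R])
    apply (rule exI[of _ "{n. 0 < n \<and> a (int n) \<noteq> 0}"], rule exI[of _ "\<lambda>n. a (int n)"], rule exI[of _ Wa])
    apply (rule exI[of _ "{n. 0 < n \<and> b (int n) \<noteq> 0}"], rule exI[of _ "\<lambda>n. b (int n)"], rule exI[of _ Wb])
    apply (rule exI[of _ A])
    by (intro conjI fpos[OF fa] fpos[OF fb] Wa Wb eqs)
qed

lemma at_part:
  assumes "finite_principal_parts_at f c"
  shows "\<exists>\<rho>>0. \<exists>Ma Pa Mb Pb A. Ma holomorphic_on UNIV \<and> Mb holomorphic_on UNIV \<and>
     (\<forall>Z ip. c \<in> Z \<longrightarrow> rational_with_poles_in (\<lambda>z. Ma (1 / (z - c))) Z ip \<and> rational_with_poles_in (\<lambda>z. Mb (1 / (z - c))) Z ip) \<and>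
     Pa holomorphic_on ball c \<rho> \<and> Pb holomorphic_on ball c \<rho> \<and>
     (\<forall>z. 0 < dist z c \<and> dist z c < \<rho> \<longrightarrow>
        (pdx f z - \<i> * pdy f z) / 2 = deriv (\<lambda>w. Ma (1 / (w - c)) + Pa w) z + A / (z - c) \<and>
        cnj (pdx f z + \<i> * pdy f z) / 2 = deriv (\<lambda>w. Mb (1 / (w - c)) + Pb w) z + cnj A / (z - c))"
proof -
  obtain \<rho> Fa ca Pa Fb cb Pb A where \<rho>: "\<rho> > 0" and fa: "finite Fa" and fb: "finite Fb"
    and Pa: "Pa holomorphic_on ball c \<rho>" and Pb: "Pb holomorphic_on ball c \<rho>"
    and eq: "\<forall>z. 0 < dist z c \<and> dist z c < \<rho> \<longrightarrow> f z = ((\<Sum>n\<in>Fa. ca n * (1 / (z - c)) ^ n) + Pa z)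
        + cnj ((\<Sum>n\<in>Fb. cb n * (1 / (z - c)) ^ n) + Pb z) + 2 * A * of_real (ln (cmod (z - c)))"
    using local_at[OF assms] by blast
  define Ma where "Ma u = (\<Sum>n\<in>Fa. ca n * u ^ n)" for u
  define Mb where "Mb u = (\<Sum>n\<in>Fb. cb n * u ^ n)" for u
  have hMa: "Ma holomorphic_on UNIV" unfolding Ma_def by (intro holomorphic_intros)
  have hMb: "Mb holomorphic_on UNIV" unfolding Mb_def by (intro holomorphic_intros)
  have rat: "\<forall>Z ip. c \<in> Z \<longrightarrow> rational_with_poles_in (\<lambda>z. Ma (1 / (z - c))) Z ip \<and> rational_with_poles_in (\<lambda>z. Mb (1 / (z - c))) Z ip"
    unfolding Ma_def Mb_def using rat_pole[OF fa] rat_pole[OF fb] by blast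
  have loc: "(pdx f z - \<i> * pdy f z) / 2 = deriv (\<lambda>w. Ma (1 / (w - c)) + Pa w) z + A / (z - c) \<and>
        cnj (pdx f z + \<i> * pdy f z) / 2 = deriv (\<lambda>w. Mb (1 / (w - c)) + Pb w) z + cnj A / (z - c)"
    if z: "0 < dist z c \<and> dist z c < \<rho>" for z
  proof -
    define U where "U = ball c \<rho> - {c}"
    have oU: "open U" by (simp add: U_def open_Diff)
    have zU: "z \<in> U" using z by (auto simp: U_def dist_commute)
    have zc: "z \<noteq> c" using z by auto
    have UU: "\<And>w. w \<in> U \<Longrightarrow> w \<noteq> c \<and> 1 / (w - c) \<in> UNIV" by (auto simp: U_def)
    have h1: "(\<lambda>w. Ma (1 / (w - c)) + Pa w) holomorphic_on U"
    proof (rule holomorphic_on_add)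
      show "(\<lambda>w. Ma (1 / (w - c))) holomorphic_on U" by (rule hol_inv_comp[OF hMa UU])
      show "Pa holomorphic_on U" by (rule holomorphic_on_subset[OF Pa]) (auto simp: U_def)
    qed
    have h2: "(\<lambda>w. Mb (1 / (w - c)) + Pb w) holomorphic_on U"
    proof (rule holomorphic_on_add)
      show "(\<lambda>w. Mb (1 / (w - c))) holomorphic_on U" by (rule hol_inv_comp[OF hMb UU])
      show "Pb holomorphic_on U" by (rule holomorphic_on_subset[OF Pb]) (auto simp: U_def)
    qed
    have eqU: "\<forall>w\<in>U. f w = (Ma (1 / (w - c)) + Pa w) + cnj (Mb (1 / (w - c)) + Pb w) + 2 * A * of_real (ln (cmod (w - c)))"
    proof
      fix w assume "w \<in> U"
      then have "0 < dist w c \<and> dist w c < \<rho>" by (auto simp: U_def dist_commute)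
      then show "f w = (Ma (1 / (w - c)) + Pa w) + cnj (Mb (1 / (w - c)) + Pb w) + 2 * A * of_real (ln (cmod (w - c)))"
        using eq unfolding Ma_def Mb_def by blast
    qed
    note r = local_wz[OF oU zU zc eqU h1 h2]
    show ?thesis using r by simp
  qed
  show ?thesis
    apply (rule exI[of _ \<rho>], rule conjI[OF \<rho>])
    apply (rule exI[of _ Ma], rule exI[of _ Pa], rule exI[of _ Mb], rule exI[of _ Pb], rule exI[of _ A])
    using hMa hMb rat Pa Pb loc by blast
qed

lemma harm_inf_lim:
  assumes "harmonic_at_infinity f"
  shows "((\<lambda>z. pdx f z) \<longlongrightarrow> 0) at_infinity \<and> ((\<lambda>z. pdy f z) \<longlongrightarrow> 0) at_infinity"
proof -
  obtain e g where e: "e > 0" and hg: "harmonic_on g (ball 0 e)"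
    and fg: "\<forall>w. 0 < norm w \<and> norm w < e \<longrightarrow> g w = f (1 / w)"
    using assms unfolding harmonic_at_infinity_def by blast
  have gd: "g differentiable (at w) \<and> pdx g differentiable (at w) \<and> pdy g differentiable (at w)"
    if "w \<in> ball 0 e" for w
    using hg that unfolding harmonic_on_def by blast
  define u where "u z = - 1 / z^2" for z :: complex
  have form: "pdx f z = of_real (Re (u z * 1)) * pdx g (1 / z) + of_real (Im (u z * 1)) * pdy g (1 / z) \<and>
              pdy f z = of_real (Re (u z * \<i>)) * pdx g (1 / z) + of_real (Im (u z * \<i>)) * pdy g (1 / z)"
    if z: "2 / e \<le> norm z" for z
  proof -
    have ie: "1 / e < 2 / e" using e by (simp add: divide_strict_right_mono)
    then have ze: "1 / e < norm z" using z by linarith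
    have z0: "z \<noteq> 0" using ze e by (auto simp: not_less[symmetric] )
    define U where "U = {w::complex. 1 / e < norm w}"
    have UC: "U = - cball 0 (1 / e)" by (auto simp: U_def)
    have oU: "open U" unfolding UC by (simp add: open_Compl)
    have zU: "z \<in> U" using ze by (simp add: U_def)
    have fU: "g (1 / w) = f w" if "w \<in> U" for w
    proof -
      have w: "1 / e < norm w" using that by (simp add: U_def)
      have w0: "w \<noteq> 0" using w e by (auto simp: not_less[symmetric])
      have "0 < norm (1 / w) \<and> norm (1 / w) < e"
        using w w0 e by (simp add: norm_divide field_simps)
      then show ?thesis using fg by simp
    qed
    have inb: "1 / z \<in> ball 0 e" using ze z0 e by (simp add: norm_divide field_simps)
    define Dg where "Dg v = of_real (Re v) * pdx g (1 / z) + of_real (Im v) * pdy g (1 / z)" for v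
    have dg: "(g has_derivative Dg) (at (1 / z))"
      unfolding Dg_def[abs_def] by (rule deriv_pd) (use gd[OF inb] in blast)
    have d1: "((\<lambda>w. 1 / w) has_field_derivative u z) (at z)"
      using z0 by (auto intro!: derivative_eq_intros simp: u_def power2_eq_square divide_simps)
    have d2: "((\<lambda>w. g (1 / w)) has_derivative (\<lambda>v. Dg (u z * v))) (at z)"
      using has_derivative_compose[OF d1[unfolded has_field_derivative_def] dg] by simp
    have d3: "(f has_derivative (\<lambda>v. Dg (u z * v))) (at z)"
      by (rule has_derivative_transform_within_open[OF d2 oU zU]) (use fU in auto)
    show ?thesis using pd_from_deriv[OF d3] by (simp add: Dg_def)
  qed
  have l0: "((\<lambda>z::complex. 1 / z) \<longlongrightarrow> 0) at_infinity"
    using inv_lim[of 1 0] by simp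
  have lu: "(u \<longlongrightarrow> 0) at_infinity"
  proof -
    have "((\<lambda>z::complex. - ((1 / z)^2)) \<longlongrightarrow> - (0^2)) at_infinity" by (intro tendsto_intros l0)
    moreover have "(\<lambda>z::complex. - ((1 / z)^2)) = u" by (rule ext) (simp add: u_def power_one_over)
    ultimately show ?thesis by simp
  qed
  have in0: "0 \<in> ball (0::complex) e" using e by simp
  have cx: "isCont (pdx g) 0"
    using differentiable_imp_continuous_within[of "pdx g" 0 UNIV] gd[OF in0] by (simp add: continuous_at)
  have cy: "isCont (pdy g) 0"
    using differentiable_imp_continuous_within[of "pdy g" 0 UNIV] gd[OF in0] by (simp add: continuous_at)
  have tx: "((\<lambda>z. pdx g (1 / z)) \<longlongrightarrow> pdx g 0) at_infinity" by (rule isCont_tendsto_compose[OF cx l0])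
  have ty: "((\<lambda>z. pdy g (1 / z)) \<longlongrightarrow> pdy g 0) at_infinity" by (rule isCont_tendsto_compose[OF cy l0])
  have L1: "((\<lambda>z. of_real (Re (u z * 1)) * pdx g (1 / z) + of_real (Im (u z * 1)) * pdy g (1 / z)) \<longlongrightarrow>
        of_real (Re (0 * 1)) * pdx g 0 + of_real (Im (0 * 1)) * pdy g 0) at_infinity"
    by (intro tendsto_intros lu tx ty)
  have L2: "((\<lambda>z. of_real (Re (u z * \<i>)) * pdx g (1 / z) + of_real (Im (u z * \<i>)) * pdy g (1 / z)) \<longlongrightarrow>
        of_real (Re (0 * \<i>)) * pdx g 0 + of_real (Im (0 * \<i>)) * pdy g 0) at_infinity"
    by (intro tendsto_intros lu tx ty)
  have ev: "eventually (\<lambda>z. 2 / e \<le> norm z) at_infinity"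
    unfolding eventually_at_infinity by blast
  have ev1: "eventually (\<lambda>z. of_real (Re (u z * 1)) * pdx g (1 / z) + of_real (Im (u z * 1)) * pdy g (1 / z) = pdx f z) at_infinity"
    using ev by eventually_elim (use form in auto)
  have ev2: "eventually (\<lambda>z. of_real (Re (u z * \<i>)) * pdx g (1 / z) + of_real (Im (u z * \<i>)) * pdy g (1 / z) = pdy f z) at_infinity"
    using ev by eventually_elim (use form in auto)
  show ?thesis
    using tendsto_cong[OF ev1] tendsto_cong[OF ev2] L1 L2 by simp
qed

lemma inf_part:
  assumes harm: "harmonic_on f (- Z)" and ip1: "\<not> ip \<longrightarrow> harmonic_at_infinity f"
    and ip2: "ip \<longrightarrow> finite_principal_parts_at_infinity f"
  shows "\<exists>Qa Qb. Qa holomorphic_on UNIV \<and> Qb holomorphic_on UNIV \<and>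
     rational_with_poles_in Qa Z ip \<and> rational_with_poles_in Qb Z ip \<and>
     ((\<lambda>z. (pdx f z - \<i> * pdy f z) / 2 - deriv Qa z) \<longlongrightarrow> 0) at_infinity \<and>
     ((\<lambda>z. cnj (pdx f z + \<i> * pdy f z) / 2 - deriv Qb z) \<longlongrightarrow> 0) at_infinity"
proof (cases ip)
  case False
  then have hi: "harmonic_at_infinity f" using ip1 by simp
  note l = harm_inf_lim[OF hi]
  have t1: "((\<lambda>z. (pdx f z - \<i> * pdy f z) / 2 - deriv (\<lambda>_. 0) z) \<longlongrightarrow> (0 - \<i> * 0) / 2 - 0) at_infinity"
    by (simp only: deriv_const) (intro tendsto_intros l[THEN conjunct1] l[THEN conjunct2] | simp)+
  have t2: "((\<lambda>z. cnj (pdx f z + \<i> * pdy f z) / 2 - deriv (\<lambda>_. 0) z) \<longlongrightarrow> cnj (0 + \<i> * 0) / 2 - 0) at_infinity"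
    by (simp only: deriv_const) (intro tendsto_intros l[THEN conjunct1] l[THEN conjunct2] | simp)+
  show ?thesis
    apply (rule exI[of _ "\<lambda>_. 0"], rule exI[of _ "\<lambda>_. 0"])
    using t1 t2 rat_const[of 0 Z ip] by simp
next
  case True
  then have fp: "finite_principal_parts_at_infinity f" using ip2 by simp
  obtain R Fa ca Wa Fb cb Wb A where R: "R > 0" and fa: "finite Fa" and fb: "finite Fb"
    and Wa: "Wa holomorphic_on ball 0 (1 / R)" and Wb: "Wb holomorphic_on ball 0 (1 / R)"
    and eq: "\<forall>z. R < norm z \<longrightarrow> f z = ((\<Sum>n\<in>Fa. ca n * z ^ n) + Wa (1 / (z - 0)))
        + cnj ((\<Sum>n\<in>Fb. cb n * z ^ n) + Wb (1 / (z - 0))) + 2 * A * of_real (ln (cmod (z - 0)))"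
    using local_inf[OF fp] by blast
  define Qa where "Qa z = (\<Sum>n\<in>Fa. ca n * z ^ n)" for z
  define Qb where "Qb z = (\<Sum>n\<in>Fb. cb n * z ^ n)" for z
  have hQa: "Qa holomorphic_on UNIV" unfolding Qa_def by (intro holomorphic_intros)
  have hQb: "Qb holomorphic_on UNIV" unfolding Qb_def by (intro holomorphic_intros)
  have rQa: "rational_with_poles_in Qa Z ip" unfolding Qa_def using rat_polyfun[OF fa] True by simp
  have rQb: "rational_with_poles_in Qb Z ip" unfolding Qb_def using rat_polyfun[OF fb] True by simp
  define U where "U = {w::complex. R < norm w}"
  have UC: "U = - cball 0 R" by (auto simp: U_def)
  have oU: "open U" unfolding UC by (simp add: open_Compl)
  have UU: "\<And>w. w \<in> U \<Longrightarrow> w \<noteq> 0 \<and> 1 / (w - 0) \<in> ball 0 (1 / R)"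
  proof -
    fix w assume "w \<in> U"
    then have w: "R < norm w" by (simp add: U_def)
    then have "w \<noteq> 0" using R by auto
    then show "w \<noteq> 0 \<and> 1 / (w - 0) \<in> ball 0 (1 / R)" using w R by (simp add: norm_divide field_simps)
  qed
  have hWa: "(\<lambda>w. Wa (1 / (w - 0))) holomorphic_on U" by (rule hol_inv_comp[OF Wa UU])
  have hWb: "(\<lambda>w. Wb (1 / (w - 0))) holomorphic_on U" by (rule hol_inv_comp[OF Wb UU])
  have h1: "(\<lambda>w. Qa w + Wa (1 / (w - 0))) holomorphic_on U"
    by (rule holomorphic_on_add[OF holomorphic_on_subset[OF hQa] hWa]) simp
  have h2: "(\<lambda>w. Qb w + Wb (1 / (w - 0))) holomorphic_on U"
    by (rule holomorphic_on_add[OF holomorphic_on_subset[OF hQb] hWb]) simp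
  have eqU: "\<forall>w\<in>U. f w = (Qa w + Wa (1 / (w - 0))) + cnj (Qb w + Wb (1 / (w - 0))) + 2 * A * of_real (ln (cmod (w - 0)))"
    using eq unfolding U_def Qa_def Qb_def by blast
  have form: "(pdx f z - \<i> * pdy f z) / 2 - deriv Qa z = deriv (\<lambda>w. Wa (1 / (w - 0))) z + A / (z - 0) \<and>
              cnj (pdx f z + \<i> * pdy f z) / 2 - deriv Qb z = deriv (\<lambda>w. Wb (1 / (w - 0))) z + cnj A / (z - 0)"
    if z: "R + 1 \<le> norm z" for z
  proof -
    have zU: "z \<in> U" using z by (simp add: U_def)
    have z0: "z \<noteq> 0" using UU[OF zU] by simp
    note r = local_wz[OF oU zU z0 eqU h1 h2]
    have fa1: "Qa field_differentiable at z" by (rule holomorphic_on_imp_differentiable_at[OF hQa]) auto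
    have fb1: "Qb field_differentiable at z" by (rule holomorphic_on_imp_differentiable_at[OF hQb]) auto
    have fa2: "(\<lambda>w. Wa (1 / (w - 0))) field_differentiable at z" by (rule holomorphic_on_imp_differentiable_at[OF hWa oU zU])
    have fb2: "(\<lambda>w. Wb (1 / (w - 0))) field_differentiable at z" by (rule holomorphic_on_imp_differentiable_at[OF hWb oU zU])
    have "deriv (\<lambda>w. Qa w + Wa (1 / (w - 0))) z = deriv Qa z + deriv (\<lambda>w. Wa (1 / (w - 0))) z"
      by (rule deriv_add[OF fa1 fa2])
    moreover have "deriv (\<lambda>w. Qb w + Wb (1 / (w - 0))) z = deriv Qb z + deriv (\<lambda>w. Wb (1 / (w - 0))) z"
      by (rule deriv_add[OF fb1 fb2])
    ultimately show ?thesis using r z0 by (simp add: field_simps)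
  qed
  have RR: "1 / R > 0" using R by simp
  have L1: "((\<lambda>z. deriv (\<lambda>w. Wa (1 / (w - 0))) z + A / (z - 0)) \<longlongrightarrow> 0 + 0) at_infinity"
    by (intro tendsto_add inf_deriv_lim[OF Wa RR] inv_lim)
  have L2: "((\<lambda>z. deriv (\<lambda>w. Wb (1 / (w - 0))) z + cnj A / (z - 0)) \<longlongrightarrow> 0 + 0) at_infinity"
    by (intro tendsto_add inf_deriv_lim[OF Wb RR] inv_lim)
  have ev: "eventually (\<lambda>z. R + 1 \<le> norm z) at_infinity"
    unfolding eventually_at_infinity by blast
  have ev1: "eventually (\<lambda>z. deriv (\<lambda>w. Wa (1 / (w - 0))) z + A / (z - 0) = (pdx f z - \<i> * pdy f z) / 2 - deriv Qa z) at_infinity"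
    using ev by eventually_elim (use form in auto)
  have ev2: "eventually (\<lambda>z. deriv (\<lambda>w. Wb (1 / (w - 0))) z + cnj A / (z - 0) = cnj (pdx f z + \<i> * pdy f z) / 2 - deriv Qb z) at_infinity"
    using ev by eventually_elim (use form in auto)
  have T1: "((\<lambda>z. (pdx f z - \<i> * pdy f z) / 2 - deriv Qa z) \<longlongrightarrow> 0) at_infinity"
    using tendsto_cong[OF ev1] L1 by simp
  have T2: "((\<lambda>z. cnj (pdx f z + \<i> * pdy f z) / 2 - deriv Qb z) \<longlongrightarrow> 0) at_infinity"
    using tendsto_cong[OF ev2] L2 by simp
  show ?thesis
    apply (rule exI[of _ Qa], rule exI[of _ Qb])
    using hQa hQb rQa rQb T1 T2 by blast
qed

lemma side:
  fixes \<Gamma> Q :: "complex \<Rightarrow> complex" and M P :: "complex \<Rightarrow> complex \<Rightarrow> complex"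
    and \<rho> :: "complex \<Rightarrow> real" and \<alpha> :: "complex \<Rightarrow> complex"
  assumes Z: "finite Z" and Ghol: "\<Gamma> holomorphic_on (- Z)"
    and M: "\<And>j. j \<in> Z \<Longrightarrow> M j holomorphic_on UNIV"
    and P: "\<And>j. j \<in> Z \<Longrightarrow> P j holomorphic_on ball j (\<rho> j)" and \<rho>: "\<And>j. j \<in> Z \<Longrightarrow> \<rho> j > 0"
    and loc: "\<And>j z. j \<in> Z \<Longrightarrow> 0 < dist z j \<Longrightarrow> dist z j < \<rho> j \<Longrightarrow>
                 \<Gamma> z = deriv (\<lambda>w. M j (1 / (w - j)) + P j w) z + \<alpha> j / (z - j)"
    and Q: "Q holomorphic_on UNIV"
    and lim: "((\<lambda>z. \<Gamma> z - deriv Q z) \<longlongrightarrow> 0) at_infinity"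
  shows "\<forall>z. z \<notin> Z \<longrightarrow> \<Gamma> z = (\<Sum>j\<in>Z. deriv (\<lambda>w. M j (1 / (w - j))) z + \<alpha> j / (z - j)) + deriv Q z"
proof -
  define T where "T j = (\<lambda>w. M j (1 / (w - j)))" for j
  have oj: "open (- {j})" for j :: complex by (simp add: open_Compl)
  have hT: "T j holomorphic_on (- {j})" if "j \<in> Z" for j
    unfolding T_def by (rule hol_inv_comp[OF M[OF that]]) auto
  have hdT: "deriv (T j) holomorphic_on (- {j})" if "j \<in> Z" for j
    by (rule holomorphic_deriv[OF hT[OF that] oj])
  have hdQ: "deriv Q holomorphic_on UNIV" by (rule holomorphic_deriv[OF Q open_UNIV])
  define E where "E z = \<Gamma> z - (\<Sum>j\<in>Z. deriv (T j) z + \<alpha> j / (z - j)) - deriv Q z" for z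
  have hE: "E holomorphic_on (- Z)"
  proof -
    have s: "(\<lambda>z. \<Sum>j\<in>Z. deriv (T j) z + \<alpha> j / (z - j)) holomorphic_on (- Z)"
    proof (rule holomorphic_on_sum)
      fix j assume j: "j \<in> Z"
      show "(\<lambda>z. deriv (T j) z + \<alpha> j / (z - j)) holomorphic_on (- Z)"
      proof (rule holomorphic_on_add)
        show "deriv (T j) holomorphic_on (- Z)" by (rule holomorphic_on_subset[OF hdT[OF j]]) (use j in auto)
        show "(\<lambda>z. \<alpha> j / (z - j)) holomorphic_on (- Z)" using j by (intro holomorphic_intros) auto
      qed
    qed
    show ?thesis unfolding E_def
      by (intro holomorphic_on_diff Ghol s holomorphic_on_subset[OF hdQ]) auto
  qed
  have locE: "\<exists>r>0. \<exists>H. H holomorphic_on ball j r \<and> (\<forall>z. 0 < dist z j \<and> dist z j < r \<longrightarrow> E z = H z)"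
    if j: "j \<in> Z" for j
  proof -
    obtain e where e: "e > 0" "\<forall>w\<in>ball j e. w \<in> UNIV \<and> (w \<noteq> j \<longrightarrow> w \<notin> Z)"
      using finite_ball_avoid[OF open_UNIV Z, of j] by blast
    define r where "r = min (\<rho> j) e"
    have r: "r > 0" using \<rho>[OF j] e by (simp add: r_def)
    define H where "H z = deriv (P j) z - (\<Sum>i\<in>Z-{j}. deriv (T i) z + \<alpha> i / (z - i)) - deriv Q z" for z
    have ballZ: "w \<noteq> i" if "w \<in> ball j r" "i \<in> Z - {j}" for w i
    proof
      assume "w = i"
      then have "i \<in> ball j e" using that by (simp add: r_def)
      then show False using e that by auto
    qed
    have hH: "H holomorphic_on ball j r"
    proof -
      have a: "deriv (P j) holomorphic_on ball j r"
        by (rule holomorphic_on_subset[OF holomorphic_deriv[OF P[OF j] open_ball]]) (auto simp: r_def)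
      have b: "(\<lambda>z. \<Sum>i\<in>Z-{j}. deriv (T i) z + \<alpha> i / (z - i)) holomorphic_on ball j r"
      proof (rule holomorphic_on_sum)
        fix i assume i: "i \<in> Z - {j}"
        show "(\<lambda>z. deriv (T i) z + \<alpha> i / (z - i)) holomorphic_on ball j r"
        proof (rule holomorphic_on_add)
          show "deriv (T i) holomorphic_on ball j r"
            by (rule holomorphic_on_subset[OF hdT]) (use i ballZ in auto)
          show "(\<lambda>z. \<alpha> i / (z - i)) holomorphic_on ball j r"
            using ballZ i by (intro holomorphic_intros) auto
        qed
      qed
      show ?thesis unfolding H_def
        by (intro holomorphic_on_diff a b holomorphic_on_subset[OF hdQ]) auto
    qed
    have eqH: "\<forall>z. 0 < dist z j \<and> dist z j < r \<longrightarrow> E z = H z"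
    proof (intro allI impI)
      fix z assume z: "0 < dist z j \<and> dist z j < r"
      have zj: "z \<noteq> j" using z by auto
      have zb: "z \<in> ball j e" using z by (simp add: r_def dist_commute)
      have zZ: "z \<notin> Z" using e zb zj by auto
      have zr: "z \<in> ball j (\<rho> j)" using z by (simp add: r_def dist_commute)
      have G: "\<Gamma> z = deriv (\<lambda>w. T j w + P j w) z + \<alpha> j / (z - j)"
        using loc[OF j] z by (simp add: T_def r_def)
      have d1: "T j field_differentiable at z"
        by (rule holomorphic_on_imp_differentiable_at[OF hT[OF j] oj]) (use zj in auto)
      have d2: "P j field_differentiable at z"
        by (rule holomorphic_on_imp_differentiable_at[OF P[OF j] open_ball zr])
      have G2: "\<Gamma> z = deriv (T j) z + deriv (P j) z + \<alpha> j / (z - j)"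
        using G deriv_add[OF d1 d2] by simp
      have S: "(\<Sum>i\<in>Z. deriv (T i) z + \<alpha> i / (z - i)) = (deriv (T j) z + \<alpha> j / (z - j)) + (\<Sum>i\<in>Z-{j}. deriv (T i) z + \<alpha> i / (z - i))"
        by (rule sum.remove[OF Z j])
      show "E z = H z" unfolding E_def H_def S G2 by (simp add: algebra_simps)
    qed
    show ?thesis using r hH eqH by blast
  qed
  have limE: "(E \<longlongrightarrow> 0) at_infinity"
  proof -
    have t: "((\<lambda>z. \<Sum>j\<in>Z. deriv (T j) z + \<alpha> j / (z - j)) \<longlongrightarrow> 0) at_infinity"
    proof (rule tendsto_null_sum)
      fix j assume j: "j \<in> Z"
      have M1: "M j holomorphic_on ball 0 1" using M[OF j] by (rule holomorphic_on_subset) simp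
      have "((\<lambda>z. deriv (T j) z + \<alpha> j / (z - j)) \<longlongrightarrow> 0 + 0) at_infinity"
        unfolding T_def by (intro tendsto_add inf_deriv_lim[OF M1] inv_lim) simp
      then show "((\<lambda>z. deriv (T j) z + \<alpha> j / (z - j)) \<longlongrightarrow> 0) at_infinity" by simp
    qed
    have "((\<lambda>z. (\<Gamma> z - deriv Q z) - (\<Sum>j\<in>Z. deriv (T j) z + \<alpha> j / (z - j))) \<longlongrightarrow> 0 - 0) at_infinity"
      by (rule tendsto_diff[OF lim t])
    moreover have "(\<lambda>z. (\<Gamma> z - deriv Q z) - (\<Sum>j\<in>Z. deriv (T j) z + \<alpha> j / (z - j))) = E"
      by (rule ext) (simp add: E_def algebra_simps)
    ultimately show ?thesis by simp
  qed
  have "\<forall>z. z \<notin> Z \<longrightarrow> E z = 0" by (rule global_zero[OF Z hE locE limE])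
  then show ?thesis by (auto simp: E_def T_def algebra_simps)
qed

lemma wirt_id: "of_real (Re v) * a + of_real (Im v) * b = ((a - \<i> * b) / 2) * v + ((a + \<i> * b) / 2) * cnj v"
  by (simp add: complex_eq_iff field_simps)

lemma choice6:
  assumes "\<forall>j\<in>Z. \<exists>a b c d e g. P j a b c d e g"
  shows "\<exists>A B C D E G. \<forall>j\<in>Z. P j (A j) (B j) (C j) (D j) (E j) (G j)"
proof -
  from bchoice[OF assms] obtain A where 1: "\<forall>j\<in>Z. \<exists>b c d e g. P j (A j) b c d e g" by blast
  from bchoice[OF 1] obtain B where 2: "\<forall>j\<in>Z. \<exists>c d e g. P j (A j) (B j) c d e g" by blast
  from bchoice[OF 2] obtain C where 3: "\<forall>j\<in>Z. \<exists>d e g. P j (A j) (B j) (C j) d e g" by blast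
  from bchoice[OF 3] obtain D where 4: "\<forall>j\<in>Z. \<exists>e g. P j (A j) (B j) (C j) (D j) e g" by blast
  from bchoice[OF 4] obtain E where 5: "\<forall>j\<in>Z. \<exists>g. P j (A j) (B j) (C j) (D j) (E j) g" by blast
  from bchoice[OF 5] obtain G where 6: "\<forall>j\<in>Z. P j (A j) (B j) (C j) (D j) (E j) (G j)" by blast
  then show ?thesis by blast
qed

lemma main1:
  assumes Z: "finite Z" and harm: "harmonic_on f (- Z)" and ip1: "\<not> ip \<longrightarrow> harmonic_at_infinity f"
    and poles: "\<forall>zj\<in>Z. filterlim f at_infinity (at zj) \<and> finite_principal_parts_at f zj"
    and ip2: "ip \<longrightarrow> filterlim f at_infinity at_infinity \<and> finite_principal_parts_at_infinity f"
  shows "\<exists>r s (A :: complex \<Rightarrow> complex) (Ainf :: complex).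
                 rational_with_poles_in r Z ip \<and> rational_with_poles_in s Z ip \<and>
                 (\<forall>z. z \<notin> Z \<longrightarrow>
                    f z = r z + cnj (s z) + (\<Sum>zj\<in>Z. 2 * A zj * of_real (ln (cmod (z - zj))))
                          + (if ip then 2 * Ainf * of_real (ln (cmod z)) else 0))"
proof -
  have ex: "\<forall>j\<in>Z. \<exists>\<rho> Ma Pa Mb Pb A. \<rho> > 0 \<and> Ma holomorphic_on UNIV \<and> Mb holomorphic_on UNIV \<and>
     (\<forall>Z ip. j \<in> Z \<longrightarrow> rational_with_poles_in (\<lambda>z. Ma (1 / (z - j))) Z ip \<and> rational_with_poles_in (\<lambda>z. Mb (1 / (z - j))) Z ip) \<and>
     Pa holomorphic_on ball j \<rho> \<and> Pb holomorphic_on ball j \<rho> \<and>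
     (\<forall>z. 0 < dist z j \<and> dist z j < \<rho> \<longrightarrow>
        (pdx f z - \<i> * pdy f z) / 2 = deriv (\<lambda>w. Ma (1 / (w - j)) + Pa w) z + A / (z - j) \<and>
        cnj (pdx f z + \<i> * pdy f z) / 2 = deriv (\<lambda>w. Mb (1 / (w - j)) + Pb w) z + cnj A / (z - j))"
  proof
    fix j assume "j \<in> Z"
    then have "finite_principal_parts_at f j" using poles by blast
    from at_part[OF this] show "\<exists>\<rho> Ma Pa Mb Pb A. \<rho> > 0 \<and> Ma holomorphic_on UNIV \<and> Mb holomorphic_on UNIV \<and>
     (\<forall>Z ip. j \<in> Z \<longrightarrow> rational_with_poles_in (\<lambda>z. Ma (1 / (z - j))) Z ip \<and> rational_with_poles_in (\<lambda>z. Mb (1 / (z - j))) Z ip) \<and>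
     Pa holomorphic_on ball j \<rho> \<and> Pb holomorphic_on ball j \<rho> \<and>
     (\<forall>z. 0 < dist z j \<and> dist z j < \<rho> \<longrightarrow>
        (pdx f z - \<i> * pdy f z) / 2 = deriv (\<lambda>w. Ma (1 / (w - j)) + Pa w) z + A / (z - j) \<and>
        cnj (pdx f z + \<i> * pdy f z) / 2 = deriv (\<lambda>w. Mb (1 / (w - j)) + Pb w) z + cnj A / (z - j))"
      by blast
  qed
  then obtain \<rho> Ma Pa Mb Pb A where AP: "\<forall>j\<in>Z. \<rho> j > 0 \<and> Ma j holomorphic_on UNIV \<and> Mb j holomorphic_on UNIV \<and>
     (\<forall>Z ip. j \<in> Z \<longrightarrow> rational_with_poles_in (\<lambda>z. Ma j (1 / (z - j))) Z ip \<and> rational_with_poles_in (\<lambda>z. Mb j (1 / (z - j))) Z ip) \<and>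
     Pa j holomorphic_on ball j (\<rho> j) \<and> Pb j holomorphic_on ball j (\<rho> j) \<and>
     (\<forall>z. 0 < dist z j \<and> dist z j < \<rho> j \<longrightarrow>
        (pdx f z - \<i> * pdy f z) / 2 = deriv (\<lambda>w. Ma j (1 / (w - j)) + Pa j w) z + A j / (z - j) \<and>
        cnj (pdx f z + \<i> * pdy f z) / 2 = deriv (\<lambda>w. Mb j (1 / (w - j)) + Pb j w) z + cnj (A j) / (z - j))"
    using choice6[OF ex] by blast
  have APr: "\<And>j. j \<in> Z \<Longrightarrow> \<rho> j > 0" using AP by blast
  have APM: "\<And>j. j \<in> Z \<Longrightarrow> Ma j holomorphic_on UNIV" using AP by blast
  have APMb: "\<And>j. j \<in> Z \<Longrightarrow> Mb j holomorphic_on UNIV" using AP by blast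
  have APra: "\<And>j. j \<in> Z \<Longrightarrow> rational_with_poles_in (\<lambda>z. Ma j (1 / (z - j))) Z ip" using AP by blast
  have APrb: "\<And>j. j \<in> Z \<Longrightarrow> rational_with_poles_in (\<lambda>z. Mb j (1 / (z - j))) Z ip" using AP by blast
  have APPa: "\<And>j. j \<in> Z \<Longrightarrow> Pa j holomorphic_on ball j (\<rho> j)" using AP by blast
  have APPb: "\<And>j. j \<in> Z \<Longrightarrow> Pb j holomorphic_on ball j (\<rho> j)" using AP by blast
  have APla: "\<And>j z. j \<in> Z \<Longrightarrow> 0 < dist z j \<Longrightarrow> dist z j < \<rho> j \<Longrightarrow>
        (pdx f z - \<i> * pdy f z) / 2 = deriv (\<lambda>w. Ma j (1 / (w - j)) + Pa j w) z + A j / (z - j)"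
    using AP by blast
  have APlb: "\<And>j z. j \<in> Z \<Longrightarrow> 0 < dist z j \<Longrightarrow> dist z j < \<rho> j \<Longrightarrow>
        cnj (pdx f z + \<i> * pdy f z) / 2 = deriv (\<lambda>w. Mb j (1 / (w - j)) + Pb j w) z + cnj (A j) / (z - j)"
    using AP by blast
  have ip2': "ip \<longrightarrow> finite_principal_parts_at_infinity f" using ip2 by blast
  obtain Qa Qb where hQa: "Qa holomorphic_on UNIV" and hQb: "Qb holomorphic_on UNIV"
    and rQa: "rational_with_poles_in Qa Z ip" and rQb: "rational_with_poles_in Qb Z ip"
    and T1: "((\<lambda>z. (pdx f z - \<i> * pdy f z) / 2 - deriv Qa z) \<longlongrightarrow> 0) at_infinity"
    and T2: "((\<lambda>z. cnj (pdx f z + \<i> * pdy f z) / 2 - deriv Qb z) \<longlongrightarrow> 0) at_infinity"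
    using inf_part[OF harm ip1 ip2'] by blast
  have gh1: "(\<lambda>z. (pdx f z - \<i> * pdy f z) / 2) holomorphic_on (- Z)"
    by (rule holomorphic_on_divide[OF harm_holo(1)[OF harm] holomorphic_on_const]) simp
  have gh2: "(\<lambda>z. cnj (pdx f z + \<i> * pdy f z) / 2) holomorphic_on (- Z)"
    by (rule holomorphic_on_divide[OF harm_holo(2)[OF harm] holomorphic_on_const]) simp
  have SA: "\<forall>z. z \<notin> Z \<longrightarrow> (pdx f z - \<i> * pdy f z) / 2 = (\<Sum>j\<in>Z. deriv (\<lambda>w. Ma j (1 / (w - j))) z + A j / (z - j)) + deriv Qa z"
    by (rule side[OF Z gh1 APM APPa APr APla hQa T1])
  have SB: "\<forall>z. z \<notin> Z \<longrightarrow> cnj (pdx f z + \<i> * pdy f z) / 2 = (\<Sum>j\<in>Z. deriv (\<lambda>w. Mb j (1 / (w - j))) z + cnj (A j) / (z - j)) + deriv Qb z"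
    by (rule side[OF Z gh2 APMb APPb APr APlb hQb T2])
  define Ta where "Ta j = (\<lambda>w. Ma j (1 / (w - j)))" for j
  define Tb where "Tb j = (\<lambda>w. Mb j (1 / (w - j)))" for j
  define R where "R z = (\<Sum>j\<in>Z. Ta j z) + Qa z" for z
  define S where "S z = (\<Sum>j\<in>Z. Tb j z) + Qb z" for z
  define L where "L z = (\<Sum>j\<in>Z. 2 * A j * of_real (ln (cmod (z - j))))" for z
  define \<Phi> where "\<Phi> z = f z - R z - cnj (S z) - L z" for z
  have oZ: "open (- Z)" using Z by (simp add: open_Compl finite_imp_closed)
  have hTa: "Ta j holomorphic_on (- {j})" if "j \<in> Z" for j
    unfolding Ta_def by (rule hol_inv_comp[OF APM[OF that]]) auto
  have hTb: "Tb j holomorphic_on (- {j})" if "j \<in> Z" for j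
    unfolding Tb_def by (rule hol_inv_comp[OF APMb[OF that]]) auto
  have oj: "open (- {j})" for j :: complex by (simp add: open_Compl)
  have dPhi: "(\<Phi> has_derivative (\<lambda>v. 0)) (at z)" if z: "z \<notin> Z" for z
  proof -
    have fd: "f differentiable (at z)" using harm z unfolding harmonic_on_def by auto
    note df = deriv_pd[OF fd]
    define dR where "dR = (\<Sum>j\<in>Z. deriv (Ta j) z) + deriv Qa z"
    define dS where "dS = (\<Sum>j\<in>Z. deriv (Tb j) z) + deriv Qb z"
    have DR: "(R has_field_derivative dR) (at z)"
      unfolding R_def[abs_def] dR_def
    proof (intro DERIV_add DERIV_sum)
      fix j assume "j \<in> Z"
      then show "(Ta j has_field_derivative deriv (Ta j) z) (at z)"
        using holomorphic_derivI[OF hTa oj, of j z UNIV] z by auto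
    next
      show "(Qa has_field_derivative deriv Qa z) (at z)"
        using holomorphic_derivI[OF hQa open_UNIV, of z UNIV] by simp
    qed
    have DS: "(S has_field_derivative dS) (at z)"
      unfolding S_def[abs_def] dS_def
    proof (intro DERIV_add DERIV_sum)
      fix j assume "j \<in> Z"
      then show "(Tb j has_field_derivative deriv (Tb j) z) (at z)"
        using holomorphic_derivI[OF hTb oj, of j z UNIV] z by auto
    next
      show "(Qb has_field_derivative deriv Qb z) (at z)"
        using holomorphic_derivI[OF hQb open_UNIV, of z UNIV] by simp
    qed
    have dcS: "((\<lambda>w. cnj (S w)) has_derivative (\<lambda>v. cnj (dS * v))) (at z)"
      by (rule bounded_linear.has_derivative[OF bounded_linear_cnj DS[unfolded has_field_derivative_def]])
    have dL: "(L has_derivative (\<lambda>v. \<Sum>j\<in>Z. A j * (v / (z - j) + cnj v / cnj (z - j)))) (at z)"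
      unfolding L_def[abs_def]
    proof (rule has_derivative_sum)
      fix j assume "j \<in> Z"
      then have "z \<noteq> j" using z by auto
      then show "((\<lambda>w. 2 * A j * of_real (ln (cmod (w - j)))) has_derivative (\<lambda>v. A j * (v / (z - j) + cnj v / cnj (z - j)))) (at z)"
        by (rule log_deriv)
    qed
    have dP: "(\<Phi> has_derivative (\<lambda>v. (of_real (Re v) * pdx f z + of_real (Im v) * pdy f z) - dR * v - cnj (dS * v)
               - (\<Sum>j\<in>Z. A j * (v / (z - j) + cnj v / cnj (z - j))))) (at z)"
      unfolding \<Phi>_def[abs_def]
      by (intro has_derivative_diff df DR[unfolded has_field_derivative_def] dcS dL)
    define SAa where "SAa = (\<Sum>j\<in>Z. A j / (z - j))"
    define SBb where "SBb = (\<Sum>j\<in>Z. A j / cnj (z - j))"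
    have e1: "(pdx f z - \<i> * pdy f z) / 2 = dR + SAa"
      using SA z by (simp add: dR_def SAa_def Ta_def sum.distrib)
    have e2: "cnj (pdx f z + \<i> * pdy f z) / 2 = dS + cnj SBb"
      using SB z by (simp add: dS_def SBb_def Tb_def sum.distrib)
    have e2': "(pdx f z + \<i> * pdy f z) / 2 = cnj dS + SBb"
    proof -
      have "cnj (cnj (pdx f z + \<i> * pdy f z) / 2) = cnj (dS + cnj SBb)" using e2 by simp
      then show ?thesis by simp
    qed
    have sl: "(\<Sum>j\<in>Z. A j * (v / (z - j) + cnj v / cnj (z - j))) = v * SAa + cnj v * SBb" for v
      by (simp add: SAa_def SBb_def sum_distrib_left sum.distrib algebra_simps)
    have "(\<lambda>v. (of_real (Re v) * pdx f z + of_real (Im v) * pdy f z) - dR * v - cnj (dS * v)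
               - (\<Sum>j\<in>Z. A j * (v / (z - j) + cnj v / cnj (z - j)))) = (\<lambda>v. 0)"
    proof (rule ext)
      fix v
      show "(of_real (Re v) * pdx f z + of_real (Im v) * pdy f z) - dR * v - cnj (dS * v)
               - (\<Sum>j\<in>Z. A j * (v / (z - j) + cnj v / cnj (z - j))) = 0"
        unfolding wirt_id sl e1 e2' by (simp add: algebra_simps)
    qed
    then show ?thesis using dP by simp
  qed
  have conn: "connected (- Z)"
    using path_connected_complement_countable[of Z] Z
    by (simp add: countable_finite path_connected_imp_connected)
  have cont: "continuous_on (- Z) \<Phi>"
    by (rule continuous_at_imp_continuous_on) (use dPhi has_derivative_continuous in blast)
  have "\<Phi> constant_on (- Z)"
    by (rule has_derivative_zero_connected_constant_on[OF conn oZ finite.emptyI cont])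
       (use dPhi has_derivative_at_withinI in blast)
  then obtain c0 where c0: "\<forall>z\<in>- Z. \<Phi> z = c0" unfolding constant_on_def by blast
  have rR: "rational_with_poles_in (\<lambda>z. (\<Sum>j\<in>Z. Ta j z) + Qa z + c0) Z ip"
  proof -
    have "rational_with_poles_in (\<lambda>z. \<Sum>j\<in>Z. Ta j z) Z ip"
      unfolding Ta_def by (rule rat_sum[OF Z APra])
    then show ?thesis using rat_add[OF rat_add[OF _ rQa] rat_const[of c0]] by blast
  qed
  have rS: "rational_with_poles_in (\<lambda>z. (\<Sum>j\<in>Z. Tb j z) + Qb z) Z ip"
  proof -
    have "rational_with_poles_in (\<lambda>z. \<Sum>j\<in>Z. Tb j z) Z ip"
      unfolding Tb_def by (rule rat_sum[OF Z APrb])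
    then show ?thesis using rat_add[OF _ rQb] by blast
  qed
  have feq: "\<forall>z. z \<notin> Z \<longrightarrow> f z = ((\<Sum>j\<in>Z. Ta j z) + Qa z + c0) + cnj ((\<Sum>j\<in>Z. Tb j z) + Qb z)
       + (\<Sum>zj\<in>Z. 2 * A zj * of_real (ln (cmod (z - zj)))) + (if ip then 2 * 0 * of_real (ln (cmod z)) else 0)"
  proof (intro allI impI)
    fix z assume "z \<notin> Z"
    then have "\<Phi> z = c0" using c0 by auto
    then show "f z = ((\<Sum>j\<in>Z. Ta j z) + Qa z + c0) + cnj ((\<Sum>j\<in>Z. Tb j z) + Qb z)
       + (\<Sum>zj\<in>Z. 2 * A zj * of_real (ln (cmod (z - zj)))) + (if ip then 2 * 0 * of_real (ln (cmod z)) else 0)"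
      by (simp add: \<Phi>_def R_def S_def L_def algebra_simps)
  qed
  show ?thesis
    apply (rule exI[of _ "\<lambda>z. (\<Sum>j\<in>Z. Ta j z) + Qa z + c0"], rule exI[of _ "\<lambda>z. (\<Sum>j\<in>Z. Tb j z) + Qb z"])
    apply (rule exI[of _ A], rule exI[of _ 0])
    using rR rS feq by blast
qed

lemma rat_empty_const:
  assumes "rational_with_poles_in g {} False"
  shows "\<exists>c. \<forall>z. g z = c"
proof -
  obtain p q where q0: "q \<noteq> 0" and nr0: "\<forall>z. poly q z = 0 \<longrightarrow> z \<in> {}" and dg0: "\<not> False \<longrightarrow> degree p \<le> degree q"
    and gv0: "\<forall>z. z \<notin> {} \<longrightarrow> g z = poly p z / poly q z"
    using assms unfolding rational_with_poles_in_def by blast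
  have nr: "\<forall>z. poly q z \<noteq> 0" using nr0 by blast
  have dg: "degree p \<le> degree q" using dg0 by blast
  have gv: "\<forall>z. g z = poly p z / poly q z" using gv0 by blast
  have dq: "degree q = 0"
  proof (rule ccontr)
    assume "degree q \<noteq> 0"
    then have "\<not> (\<exists>a l. a \<noteq> 0 \<and> l = 0 \<and> q = pCons a l)" by auto
    then have "\<exists>z. poly q z = 0" by (rule fundamental_theorem_of_algebra_alt)
    then obtain z where "poly q z = 0" by blast
    then show False using nr by blast
  qed
  have dp: "degree p = 0" using dg dq by simp
  have ep: "poly p z = coeff p 0" for z
  proof -
    have "poly p z = poly [:coeff p 0:] z" by (simp only: degree_0_id[OF dp])
    then show ?thesis by simp
  qed
  have eq: "poly q z = coeff q 0" for z
  proof -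
    have "poly q z = poly [:coeff q 0:] z" by (simp only: degree_0_id[OF dq])
    then show ?thesis by simp
  qed
  have "\<forall>z. g z = coeff p 0 / coeff q 0" using gv ep eq by simp
  then show ?thesis by blast
qed

lemma main2:
  assumes "harmonic_on f UNIV" "harmonic_at_infinity f"
  shows "\<exists>c. \<forall>z. f z = c"
proof -
  have h1: "harmonic_on f (- {})" using assms(1) by simp
  have h2: "\<not> False \<longrightarrow> harmonic_at_infinity f" using assms(2) by simp
  have h3: "\<forall>zj\<in>{}. filterlim f at_infinity (at zj) \<and> finite_principal_parts_at f zj" by simp
  have h4: "False \<longrightarrow> filterlim f at_infinity at_infinity \<and> finite_principal_parts_at_infinity f" by simp
  obtain r s A Ainf where rr: "rational_with_poles_in r {} False" and rs: "rational_with_poles_in s {} False"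
    and eq0: "\<forall>z. z \<notin> {} \<longrightarrow> f z = r z + cnj (s z) + (\<Sum>zj\<in>{}. 2 * A zj * of_real (ln (cmod (z - zj))))
                          + (if False then 2 * Ainf * of_real (ln (cmod z)) else 0)"
    using main1[OF finite.emptyI h1 h2 h3 h4] by blast
  have eq: "\<forall>z. f z = r z + cnj (s z)" using eq0 by simp
  obtain c1 where c1: "\<forall>z. r z = c1" using rat_empty_const[OF rr] by blast
  obtain c2 where c2: "\<forall>z. s z = c2" using rat_empty_const[OF rs] by blast
  show ?thesis using eq c1 c2 by auto
qed

theorem proposition2p1:
  shows "(\<forall>(Z :: complex set) (inf_pole :: bool) (f :: complex \<Rightarrow> complex).
            finite Z \<and> harmonic_on f (- Z) \<and>
            (\<not> inf_pole \<longrightarrow> harmonic_at_infinity f) \<and>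
            (\<forall>zj\<in>Z. filterlim f at_infinity (at zj) \<and> finite_principal_parts_at f zj) \<and>
            (inf_pole \<longrightarrow> filterlim f at_infinity at_infinity \<and> finite_principal_parts_at_infinity f)
          \<longrightarrow> (\<exists>r s (A :: complex \<Rightarrow> complex) (Ainf :: complex).
                 rational_with_poles_in r Z inf_pole \<and> rational_with_poles_in s Z inf_pole \<and>
                 (\<forall>z. z \<notin> Z \<longrightarrow>
                    f z = r z + cnj (s z) + (\<Sum>zj\<in>Z. 2 * A zj * of_real (ln (cmod (z - zj))))
                          + (if inf_pole then 2 * Ainf * of_real (ln (cmod z)) else 0))))
        \<and> (\<forall>f :: complex \<Rightarrow> complex. harmonic_on f UNIV \<and> harmonic_at_infinity f \<longrightarrow>
             (\<exists>c. \<forall>z. f z = c))"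
proof (intro conjI allI impI)
  fix Z ip f
  assume H: "finite Z \<and> harmonic_on f (- Z) \<and>
            (\<not> ip \<longrightarrow> harmonic_at_infinity f) \<and>
            (\<forall>zj\<in>Z. filterlim f at_infinity (at zj) \<and> finite_principal_parts_at f zj) \<and>
            (ip \<longrightarrow> filterlim f at_infinity at_infinity \<and> finite_principal_parts_at_infinity f)"
  then have h1: "finite Z" and h2: "harmonic_on f (- Z)" and h3: "\<not> ip \<longrightarrow> harmonic_at_infinity f"
    and h4: "\<forall>zj\<in>Z. filterlim f at_infinity (at zj) \<and> finite_principal_parts_at f zj"
    and h5: "ip \<longrightarrow> filterlim f at_infinity at_infinity \<and> finite_principal_parts_at_infinity f"
    by blast+
  show "\<exists>r s (A :: complex \<Rightarrow> complex) (Ainf :: complex).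
                 rational_with_poles_in r Z ip \<and> rational_with_poles_in s Z ip \<and>
                 (\<forall>z. z \<notin> Z \<longrightarrow>
                    f z = r z + cnj (s z) + (\<Sum>zj\<in>Z. 2 * A zj * of_real (ln (cmod (z - zj))))
                          + (if ip then 2 * Ainf * of_real (ln (cmod z)) else 0))"
    by (rule main1[OF h1 h2 h3 h4 h5])
next
  fix f :: "complex \<Rightarrow> complex"
  assume "harmonic_on f UNIV \<and> harmonic_at_infinity f"
  then show "\<exists>c. \<forall>z. f z = c" using main2 by blast
qed

end
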